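(* Let $L\in\mathrm{Gr}(\mathbb R^n,m)$ and let $(B,N)$ be its Goldman–Tucker partition. Then: (a) If $|||\cdot|||=\|\cdot\|_\infty$: $\sigma(L_B)=\nu(L_B)=\max_{x\in L\cap\mathbb R^n_+,\|x\|=1}\min_{i\in B}x_i$ and $\sigma(L_N)=\nu(L_N)=\max_{x\in L^\perp\cap\mathbb R^n_+,\|x\|=1}\min_{i\in N}x_i$. In particular, if also $\|\cdot\|=\|\cdot\|_1$: $\sigma(L_B)=\nu(L_B)=\max_{x\in L\cap\Delta_{n-1}}\min_{i\in B}x_i$ and $\sigma(L_N)=\nu(L_N)=\max_{x\in L^\perp\cap\Delta_{n-1}}\min_{i\in N}x_i$. (b) If $|||\cdot|||=\|\cdot\|_1$: $\sigma(L_B)=\nu(L_B)=\min_{i\in B}\max_{x\in L\cap\mathbb R^n_+,\|x\|=1}x_i$ and $\sigma(L_N)=\nu(L_N)=\min_{i\in N}\max_{x\in L^\perp\cap\mathbb R^n_+,\|x\|=1}x_i$. In particular, if also $\|\cdot\|=\|\cdot\|_1$: $\sigma(L_B)=\nu(L_B)=\min_{i\in B}\max_{x\in L\cap\Delta_{n-1}}x_i$ and $\sigma(L_N)=\nu(L_N)=\min_{i\in N}\max_{x\in L^\perp\cap\Delta_{n-1}}x_i$. (c) If $\|\cdot\|=|||\cdot|||=\|\cdot\|_2$: $\sigma(L_B)=\nu(L_B)=\min_{u\in\mathbb R^B_+\times\{0_N\},\|u\|_2=1}\max_{x\in L\cap\mathbb R^n_+,\|x\|_2=1}\langle u,x\rangle$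 and $\sigma(L_N)=\nu(L_N)=\min_{u\in\{0_B\}\times\mathbb R^N_+,\|u\|_2=1}\max_{x\in L^\perp\cap\mathbb R^n_+,\|x\|_2=1}\langle u,x\rangle$.
   Context: $V=\mathbb R^n$ with the dot product, $K=\mathbb R^n_+$; $\mathrm{Gr}(\mathbb R^n,m)$ is the set of $m$-dimensional subspaces ($1\le m<n$), $L^\perp$ the orthogonal complement; $\Delta_{n-1}:=\{x\in\mathbb R^n_+:\sum_ix_i=1\}$. For every $L\in\mathrm{Gr}(\mathbb R^n,m)$ there is a unique partition $B\cup N=\{1,\dots,n\}$ (the Goldman–Tucker partition) with $L\cap(\operatorname{int}\mathbb R^B_+\times\{0_N\})\neq\emptyset$ and $L^\perp\cap(\{0_B\}\times\operatorname{int}\mathbb R^N_+)\neq\emptyset$. Set $V_B:=\mathbb R^B\times\{0_N\}$, $K_B:=\mathbb R^B_+\times\{0_N\}$, $V_N:=\{0_B\}\times\mathbb R^N$, $K_N:=\{0_B\}\times\mathbb R^N_+$, $L_B:=L\cap V_B$, $L_N:=L^\perp\cap V_N$. For a coordinate subspace $V'\in\{V_B,V_N\}$ with cone $K'\in\{K_B,K_N\}$ and a subspace $L'\subseteq V'$ (with $L'\cap\operatorname{int}_{V'}K'\neq\emptyset$), the quantities are computed inside $V'$ (orthogonal complement, dual cone $K'^*=K'$, and norms restricted to $V'$, dual norms taken within $V'$): $\nu(L'):=\min\{\|u-y\|^*:u\in K',\ y\in L'^{\perp}\cap V',\ |||u|||^*=1\}$, and $\sigma(L'):=\min_{v\in K',|||v|||=1}\max_{x\in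 L',\|x\|\le1}\lambda_v(x)$ where $\lambda_v(x):=\sup\{t: x-tv\in K'\}$. Here $\|\cdot\|,|||\cdot|||$ are the specified norms on $\mathbb R^n$ and $\|u\|^*:=\max_{\|x\|=1}\langle u,x\rangle$, $|||u|||^*:=\max_{|||x|||=1}\langle u,x\rangle$. *)

theory Defs
  imports "HOL-Analysis.Analysis" "HOL-Library.Extended_Real"
begin

text \<open>Ambient space V = real^'n with the dot product; K = nonnegative orthant.\<close>

definition nonneg :: "real^'n \<Rightarrow> bool" where
  "nonneg x \<longleftrightarrow> (\<forall>i. 0 \<le> x $ i)"

definition is_norm :: "(real^'n \<Rightarrow> real) \<Rightarrow> bool" where
  "is_norm f \<longleftrightarrow> (\<forall>x. 0 \<le> f x) \<and> (\<forall>x. f x = 0 \<longleftrightarrow> x = 0) \<and>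
     (\<forall>c x. f (c *\<^sub>R x) = \<bar>c\<bar> * f x) \<and> (\<forall>x y. f (x + y) \<le> f x + f y)"

definition norm_inf :: "real^'n \<Rightarrow> real" where
  "norm_inf x = Max (range (\<lambda>i. \<bar>x $ i\<bar>))"

definition norm_one :: "real^'n \<Rightarrow> real" where
  "norm_one x = (\<Sum>i\<in>UNIV. \<bar>x $ i\<bar>)"

definition std_simplex :: "(real^'n) set" where
  "std_simplex = {x. nonneg x \<and> (\<Sum>i\<in>UNIV. x $ i) = 1}"

definition Gr :: "nat \<Rightarrow> (real^'n) set set" where
  "Gr m = {L. subspace L \<and> dim L = m}"

definition VS :: "'n set \<Rightarrow> (real^'n) set" where
  "VS S = {x. \<forall>i. i \<notin> S \<longrightarrow> x $ i = 0}"

definition KS :: "'n set \<Rightarrow> (real^'n) set" where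
  "KS S = {x \<in> VS S. nonneg x}"

text \<open>Goldman--Tucker partition (B, N = -B) of L.\<close>
definition GT_partition :: "(real^'n) set \<Rightarrow> 'n set \<Rightarrow> bool" where
  "GT_partition L B \<longleftrightarrow>
     (\<exists>x\<in>L. (\<forall>i\<in>B. 0 < x $ i) \<and> (\<forall>i. i \<notin> B \<longrightarrow> x $ i = 0)) \<and>
     (\<exists>y\<in>orthogonal_comp L. (\<forall>i\<in>B. y $ i = 0) \<and> (\<forall>i. i \<notin> B \<longrightarrow> 0 < y $ i))"

definition dualV :: "'n set \<Rightarrow> (real^'n \<Rightarrow> real) \<Rightarrow> real^'n \<Rightarrow> real" where
  "dualV S f u = Sup {u \<bullet> x | x. x \<in> VS S \<and> f x = 1}"

definition orthV :: "'n set \<Rightarrow> (real^'n) set \<Rightarrow> (real^'n) set" where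
  "orthV S L' = orthogonal_comp L' \<inter> VS S"

text \<open>nu(L') inside V_S, with norm nrm = ||.|| and tnrm = |||.|||.\<close>
definition nuV :: "'n set \<Rightarrow> (real^'n \<Rightarrow> real) \<Rightarrow> (real^'n \<Rightarrow> real) \<Rightarrow> (real^'n) set \<Rightarrow> real" where
  "nuV S nrm tnrm L' = Inf {dualV S nrm (u - y) | u y.
      u \<in> KS S \<and> y \<in> orthV S L' \<and> dualV S tnrm u = 1}"

text \<open>lambda_v(x) = sup{t. x - t v in K_S}, as an extended real (sup of empty set = -infinity).\<close>
definition lamV :: "'n set \<Rightarrow> real^'n \<Rightarrow> real^'n \<Rightarrow> ereal" where
  "lamV S v x = Sup {ereal t | t. x - t *\<^sub>R v \<in> KS S}"

definition sigmaV :: "'n set \<Rightarrow> (real^'n \<Rightarrow> real) \<Rightarrow> (real^'n \<Rightarrow> real) \<Rightarrow> (real^'n) set \<Rightarrow> ereal" where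
  "sigmaV S nrm tnrm L' = Inf {Sup {lamV S v x | x. x \<in> L' \<and> nrm x \<le> 1} | v.
      v \<in> KS S \<and> tnrm v = 1}"

end

theory Submission
  imports Defs
begin



lemma inner_cart: "(x::real^'n) \<bullet> y = (\<Sum>i\<in>UNIV. x$i * y$i)"
  by (simp add: inner_vec_def)

lemma isn_basic:
  assumes "is_norm f"
  shows "f 0 = 0" "f (- x) = f x" "f x \<ge> 0" "f (c *\<^sub>R x) = \<bar>c\<bar> * f x"
    "f (x + y) \<le> f x + f y" "f (x - y) \<le> f x + f y" "f x = 0 \<longleftrightarrow> x = 0"
proof -
  have n1: "\<And>x. f x = 0 \<longleftrightarrow> x = 0" and n2: "\<And>x. f x \<ge> 0"
   and n3: "\<And>c x. f (c *\<^sub>R x) = \<bar>c\<bar> * f x" and n4: "\<And>x y. f (x + y) \<le> f x + f y"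
    using assms unfolding is_norm_def by auto
  have fm: "\<And>x. f (- x) = f x"
  proof -
    fix x
    have "f (- x) = f ((-1) *\<^sub>R x)" by simp
    also have "\<dots> = f x" using n3[of "-1" x] by simp
    finally show "f (- x) = f x" .
  qed
  show "f 0 = 0" using n1 by simp
  show "f (- x) = f x" by (rule fm)
  show "f x \<ge> 0" by (rule n2)
  show "f (c *\<^sub>R x) = \<bar>c\<bar> * f x" by (rule n3)
  show "f (x + y) \<le> f x + f y" by (rule n4)
  show "f x = 0 \<longleftrightarrow> x = 0" by (rule n1)
  have "f (x - y) = f (x + (- y))" by simp
  also have "\<dots> \<le> f x + f (- y)" by (rule n4)
  finally show "f (x - y) \<le> f x + f y" using fm by simp
qed

lemma isn_sum:
  assumes "is_norm f" "finite A"
  shows "f (sum g A) \<le> (\<Sum>i\<in>A. f (g i))"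
  using assms(2)
proof (induction A rule: finite_induct)
  case empty then show ?case using isn_basic(1)[OF assms(1)] by simp
next
  case (insert a A)
  have "f (sum g (insert a A)) = f (g a + sum g A)" using insert by simp
  also have "\<dots> \<le> f (g a) + f (sum g A)" using isn_basic[OF assms(1)] by blast
  also have "\<dots> \<le> f (g a) + (\<Sum>i\<in>A. f (g i))" using insert by simp
  finally show ?case using insert by simp
qed

lemma isn_upper:
  assumes "is_norm f"
  shows "\<exists>K>0. \<forall>x::real^'n. f x \<le> K * norm x"
proof -
  define K0 where "K0 = (\<Sum>i\<in>UNIV. f (axis i (1::real)::real^'n))"
  have K0: "K0 \<ge> 0" unfolding K0_def using isn_basic[OF assms] by (simp add: sum_nonneg)
  have "f x \<le> K0 * norm x" for x :: "real^'n"
  proof -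
    have "x = (\<Sum>i\<in>UNIV. x$i *\<^sub>R axis i 1)"
      using basis_expansion[of x] by (simp add: scalar_mult_eq_scaleR)
    then have "f x = f (\<Sum>i\<in>UNIV. x$i *\<^sub>R axis i 1)" by simp
    also have "\<dots> \<le> (\<Sum>i\<in>UNIV. f (x$i *\<^sub>R axis i 1))" by (rule isn_sum[OF assms]) simp
    also have "\<dots> = (\<Sum>i\<in>UNIV. \<bar>x$i\<bar> * f (axis i 1))" using isn_basic[OF assms] by simp
    also have "\<dots> \<le> (\<Sum>i\<in>UNIV. norm x * f (axis i 1))"
      by (rule sum_mono) (simp add: component_le_norm_cart isn_basic[OF assms] mult_right_mono)
    also have "\<dots> = K0 * norm x" unfolding K0_def by (simp add: sum_distrib_left mult.commute)
    finally show ?thesis .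
  qed
  note fx = this
  show ?thesis
  proof (intro exI[of _ "K0 + 1"] conjI allI)
    show "K0 + 1 > 0" using K0 by simp
    fix x :: "real^'n"
    have "f x \<le> K0 * norm x" by (rule fx)
    also have "\<dots> \<le> (K0 + 1) * norm x" by (simp add: mult_right_mono)
    finally show "f x \<le> (K0 + 1) * norm x" .
  qed
qed

lemma isn_lower:
  assumes "is_norm f"
  shows "\<exists>c>0. \<forall>x::real^'n. c * norm x \<le> f x"
proof -
  obtain K where K: "K > 0" "\<And>x::real^'n. f x \<le> K * norm x" using isn_upper[OF assms] by blast
  have lip: "K-lipschitz_on (sphere (0::real^'n) 1) f"
  proof (rule lipschitz_onI)
    fix x y :: "real^'n"
    have n4: "f (a + b) \<le> f a + f b" for a b using isn_basic[OF assms] by auto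
    have fm: "f (- a) = f a" for a using isn_basic[OF assms] by auto
    have a: "f x \<le> f y + f (x - y)" using n4[of y "x - y"] by simp
    have b: "f y \<le> f x + f (y - x)" using n4[of x "y - x"] by simp
    have c: "f (y - x) = f (x - y)" using fm[of "x - y"] by simp
    have "\<bar>f x - f y\<bar> \<le> f (x - y)" using a b c by linarith
    also have "\<dots> \<le> K * norm (x - y)" using K by simp
    finally show "dist (f x) (f y) \<le> K * dist x y" by (simp add: dist_real_def dist_norm)
  qed (use K in simp)
  have cont: "continuous_on (sphere (0::real^'n) 1) f"
    by (rule lipschitz_on_continuous_on[OF lip])
  obtain x0 where x0: "x0 \<in> sphere (0::real^'n) 1" "\<And>y. y \<in> sphere 0 1 \<Longrightarrow> f x0 \<le> f y"
  proof -
    have "sphere (0::real^'n) 1 \<noteq> {}" by (simp add: sphere_eq_empty)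
    then show ?thesis using continuous_attains_inf[OF compact_sphere _ cont] that by blast
  qed
  have x0ne: "x0 \<noteq> 0" using x0(1) by auto
  then have c0: "f x0 > 0" using isn_basic(3,7)[OF assms, of x0] by (metis less_eq_real_def)
  have "f x0 * norm x \<le> f x" for x :: "real^'n"
  proof (cases "x = 0")
    case True then show ?thesis using isn_basic(1)[OF assms] by simp
  next
    case False
    have "(1 / norm x) *\<^sub>R x \<in> sphere 0 1" using False by simp
    then have "f x0 \<le> f ((1 / norm x) *\<^sub>R x)" by (rule x0(2))
    also have "\<dots> = f x / norm x" using isn_basic(4)[OF assms] by simp
    finally show ?thesis using False by (simp add: field_simps)
  qed
  then show ?thesis using c0 by blast
qed




definition rs :: "'n set \<Rightarrow> real^'n \<Rightarrow> real^'n" where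
  "rs S a = (\<chi> i. if i \<in> S then a$i else 0)"

lemma rs_VS: "rs S a \<in> VS S" by (simp add: rs_def VS_def)

lemma rs_inner: "x \<in> VS S \<Longrightarrow> rs S a \<bullet> x = a \<bullet> x"
  unfolding inner_cart rs_def VS_def by (intro sum.cong) auto

lemma subspace_VS: "subspace (VS S)"
  unfolding subspace_def VS_def by auto

lemma VS_iff: "x \<in> VS S \<longleftrightarrow> (\<forall>i. i \<notin> S \<longrightarrow> x$i = 0)" by (simp add: VS_def)

lemma KS_iff: "x \<in> KS S \<longleftrightarrow> (\<forall>i. i \<notin> S \<longrightarrow> x$i = 0) \<and> (\<forall>i. 0 \<le> x$i)"
  by (simp add: KS_def VS_def nonneg_def)

lemma convex_KS: "convex (KS S)"
  unfolding convex_def by (auto simp: KS_iff intro!: add_nonneg_nonneg)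

lemma closed_KS: "closed (KS (S::'n::finite set))"
proof -
  have "KS S = (\<Inter>i\<in>-S. {x::real^'n. x$i = 0}) \<inter> (\<Inter>i. {x::real^'n. 0 \<le> x$i})"
    by (auto simp: KS_iff)
  moreover have "closed {x::real^'n. x$i = 0}" for i
    using closed_hyperplane[of "axis i (1::real)" 0] by (simp add: inner_axis' inner_real_def)
  moreover have "closed {x::real^'n. 0 \<le> x$i}" for i
    using closed_halfspace_ge[of 0 "axis i (1::real)"] by (simp add: inner_axis' inner_real_def)
  ultimately show ?thesis by (auto intro!: closed_Int closed_INT)
qed

lemma KS_add: "x \<in> KS S \<Longrightarrow> y \<in> KS S \<Longrightarrow> x + y \<in> KS S" by (auto simp: KS_iff)
lemma KS_scale: "x \<in> KS S \<Longrightarrow> c \<ge> 0 \<Longrightarrow> c *\<^sub>R x \<in> KS S" by (auto simp: KS_iff)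
lemma KS_axis: "i \<in> S \<Longrightarrow> axis i 1 \<in> KS S" by (auto simp: KS_iff axis_def)
lemma KS_zero: "0 \<in> KS S" by (auto simp: KS_iff)
lemma KS_VS: "x \<in> KS S \<Longrightarrow> x \<in> VS S" by (auto simp: KS_iff VS_iff)

lemma inner_nonneg_nonneg: "nonneg (x::real^'n) \<Longrightarrow> nonneg y \<Longrightarrow> 0 \<le> x \<bullet> y"
  unfolding inner_cart nonneg_def by (auto intro!: sum_nonneg)

lemma inner_VS: "x \<in> VS S \<Longrightarrow> x \<bullet> y = (\<Sum>i\<in>S. x$i * y$i)"
  unfolding inner_cart VS_iff by (rule sum.mono_neutral_right) auto

locale GTset =
  fixes S :: "'n::finite set" and M :: "(real^'n) set" and nrm :: "real^'n \<Rightarrow> real" and p :: "real^'n"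
  assumes Sne: "S \<noteq> {}" and subM: "subspace M" and MV: "M \<subseteq> VS S" and pM: "p \<in> M"
    and ppos: "\<forall>i\<in>S. 0 < p$i" and isn: "is_norm nrm"
begin

definition C where "C = {x \<in> M. nonneg x}"
definition W where "W = orthV S M"
abbreviation Nd where "Nd d \<equiv> dualV S nrm d"

definition cn where "cn = (SOME c. c > 0 \<and> (\<forall>x. c * norm x \<le> nrm x))"
definition Kn where "Kn = (SOME c. c > 0 \<and> (\<forall>x. nrm x \<le> c * norm x))"

lemma cn: "cn > 0" "cn * norm x \<le> nrm x"
proof -
  have "\<exists>c. c > 0 \<and> (\<forall>x. c * norm x \<le> nrm x)" using isn_lower[OF isn] by blast
  from someI_ex[OF this] show "cn > 0" "cn * norm x \<le> nrm x" unfolding cn_def by auto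
qed

lemma Kn: "Kn > 0" "nrm x \<le> Kn * norm x"
proof -
  have "\<exists>c. c > 0 \<and> (\<forall>x. nrm x \<le> c * norm x)" using isn_upper[OF isn] by blast
  from someI_ex[OF this] show "Kn > 0" "nrm x \<le> Kn * norm x" unfolding Kn_def by auto
qed

lemmas nb = isn_basic[OF isn]

lemma norm_le_nrm: "norm x \<le> nrm x / cn"
  using cn by (simp add: field_simps mult.commute)

lemma nrm_pos: "x \<noteq> 0 \<Longrightarrow> nrm x > 0"
  using nb(3)[of x] nb(7)[of x] by linarith

lemma nrm_normalize: "x \<noteq> 0 \<Longrightarrow> nrm ((1 / nrm x) *\<^sub>R x) = 1"
  using nrm_pos[of x] nb(4)[of "1 / nrm x" x] by simp

lemma subVS: "subspace (VS S)" by (rule subspace_VS)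

lemma VS_scale: "x \<in> VS S \<Longrightarrow> c *\<^sub>R x \<in> VS S" by (simp add: VS_iff)
lemma VS_diff: "x \<in> VS S \<Longrightarrow> y \<in> VS S \<Longrightarrow> x - y \<in> VS S" by (simp add: VS_iff)
lemma VS_add: "x \<in> VS S \<Longrightarrow> y \<in> VS S \<Longrightarrow> x + y \<in> VS S" by (simp add: VS_iff)

definition DS where "DS d = {d \<bullet> x | x. x \<in> VS S \<and> nrm x = 1}"

lemma DS_ne: "DS d \<noteq> {}"
proof -
  obtain i where "i \<in> S" using Sne by blast
  then have "axis i (1::real) \<in> VS S" "axis i (1::real) \<noteq> 0" by (auto simp: VS_iff axis_def vec_eq_iff)
  then have "(1 / nrm (axis i 1)) *\<^sub>R axis i 1 \<in> VS S" "nrm ((1 / nrm (axis i 1)) *\<^sub>R axis i (1::real)) = 1"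
    using VS_scale nrm_normalize by auto
  then show ?thesis unfolding DS_def by blast
qed

lemma DS_bdd: "bdd_above (DS d)"
proof -
  have "d \<bullet> x \<le> norm d * (1 / cn)" if "nrm x = 1" for x
  proof -
    have "d \<bullet> x \<le> norm d * norm x" by (metis Cauchy_Schwarz_ineq2 abs_le_D1 norm_ge_zero)
    also have "\<dots> \<le> norm d * (1 / cn)" using norm_le_nrm[of x] that by (intro mult_left_mono) auto
    finally show ?thesis .
  qed
  then show ?thesis unfolding DS_def bdd_above_def by blast
qed

lemma Nd_eq: "Nd d = Sup (DS d)" unfolding dualV_def DS_def by simp

lemma N1: assumes "x \<in> VS S" shows "d \<bullet> x \<le> Nd d * nrm x"
proof (cases "x = 0")
  case True then show ?thesis using nb(1) by simp
next
  case False
  let ?y = "(1 / nrm x) *\<^sub>R x"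
  have "?y \<in> VS S" "nrm ?y = 1" using assms False VS_scale nrm_normalize by auto
  then have "d \<bullet> ?y \<in> DS d" unfolding DS_def by blast
  then have "d \<bullet> ?y \<le> Nd d" unfolding Nd_eq using DS_bdd by (rule cSup_upper)
  moreover have "d \<bullet> ?y = (d \<bullet> x) / nrm x" by simp
  ultimately have "(d \<bullet> x) / nrm x \<le> Nd d" by simp
  then show ?thesis using nrm_pos[OF False] by (simp add: divide_le_eq)
qed

lemma N2: assumes "\<And>x. x \<in> VS S \<Longrightarrow> nrm x = 1 \<Longrightarrow> d \<bullet> x \<le> r" shows "Nd d \<le> r"
  unfolding Nd_eq using DS_ne by (rule cSup_least) (auto simp: DS_def assms)

lemma N_nonneg: "Nd d \<ge> 0"
proof -
  obtain x where x: "x \<in> VS S" "nrm x = 1" using DS_ne unfolding DS_def by blast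
  have "d \<bullet> x \<le> Nd d" using N1[OF x(1), of d] x by simp
  moreover have "d \<bullet> (-x) \<le> Nd d" using N1[of "-x" d] x nb(2)[of x] VS_scale[OF x(1), of "-1"] by simp
  ultimately show ?thesis by simp
qed

lemma N_le_norm: "Nd d \<le> norm d / cn"
proof (rule N2)
  fix x assume "x \<in> VS S" "nrm x = 1"
  have "d \<bullet> x \<le> norm d * norm x" by (metis Cauchy_Schwarz_ineq2 abs_le_D1 norm_ge_zero)
  also have "\<dots> \<le> norm d * (1 / cn)" using norm_le_nrm[of x] \<open>nrm x = 1\<close> by (intro mult_left_mono) auto
  finally show "d \<bullet> x \<le> norm d / cn" by simp
qed

lemma N_scale_le: assumes "c \<ge> 0" shows "Nd (c *\<^sub>R d) \<le> c * Nd d"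
proof (rule N2)
  fix x assume "x \<in> VS S" "nrm x = 1"
  then have "d \<bullet> x \<le> Nd d" using N1[of x d] by simp
  then show "(c *\<^sub>R d) \<bullet> x \<le> c * Nd d" using assms by (simp add: mult_left_mono)
qed

lemma N_tri: "Nd (d + e) \<le> Nd d + Nd e"
proof (rule N2)
  fix x assume "x \<in> VS S" "nrm x = 1"
  then show "(d + e) \<bullet> x \<le> Nd d + Nd e" using N1[of x d] N1[of x e] by (simp add: inner_add_left)
qed

lemma N_lip: "Nd d' \<le> Nd d + norm (d' - d) / cn"
proof -
  have "Nd d' = Nd (d + (d' - d))" by simp
  also have "\<dots> \<le> Nd d + Nd (d' - d)" by (rule N_tri)
  also have "\<dots> \<le> Nd d + norm (d' - d) / cn" using N_le_norm by simp
  finally show ?thesis .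
qed

end



lemma lin1: fixes a b c :: real assumes "\<And>t. t \<ge> 0 \<Longrightarrow> a + t * c > b" shows "c \<ge> 0"
proof (rule ccontr)
  assume "\<not> c \<ge> 0"
  then have c: "c < 0" by simp
  define t where "t = (\<bar>a\<bar> + \<bar>b\<bar> + 1) / (- c)"
  have t0: "t \<ge> 0" unfolding t_def by (intro divide_nonneg_pos) (use c in auto)
  have "t * c = - (\<bar>a\<bar> + \<bar>b\<bar> + 1)" using c unfolding t_def by (simp add: field_simps)
  then have "a + t * c \<le> b" by linarith
  with assms[OF t0] show False by simp
qed

lemma lin2: fixes a b c :: real assumes "\<And>t. a - t * c > b" shows "c = 0"
proof -
  have "- c \<ge> 0"
  proof (rule lin1[where a=a and b=b and c="- c"])
    fix t :: real show "a + t * - c > b" using assms[of t] by simp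
  qed
  moreover have "c \<ge> 0"
  proof (rule lin1[where a=a and b=b and c=c])
    fix t :: real show "a + t * c > b" using assms[of "- t"] by simp
  qed
  ultimately show ?thesis by simp
qed

context GTset begin

lemma W_VS: "w \<in> W \<Longrightarrow> w \<in> VS S" by (simp add: W_def orthV_def)
lemma subW: "subspace W"
  unfolding W_def orthV_def by (intro subspace_inter subspace_orthogonal_comp subVS)
lemma W_iff: "w \<in> W \<longleftrightarrow> w \<in> VS S \<and> (\<forall>x\<in>M. w \<bullet> x = 0)"
  by (auto simp: W_def orthV_def orthogonal_comp_def orthogonal_def inner_commute)
lemma W_perp: "w \<in> W \<Longrightarrow> x \<in> M \<Longrightarrow> w \<bullet> x = 0"
  using W_iff by blast

lemma M_VS: "x \<in> M \<Longrightarrow> x \<in> VS S" using MV by blast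

lemma perpM: assumes "z \<in> VS S" "\<And>w. w \<in> W \<Longrightarrow> z \<bullet> w = 0" shows "z \<in> M"
proof -
  obtain y r where y: "y \<in> span M" and r: "\<And>w. w \<in> span M \<Longrightarrow> orthogonal r w" and zyr: "z = y + r"
    using orthogonal_subspace_decomp_exists[of M z] by metis
  have yM: "y \<in> M" using y subM span_eq_iff by blast
  have rW: "r \<in> W"
  proof -
    have "r = z - y" using zyr by simp
    then have "r \<in> VS S" using VS_diff[OF assms(1) M_VS[OF yM]] by simp
    moreover have "\<forall>x\<in>M. r \<bullet> x = 0"
    proof
      fix x assume "x \<in> M"
      then have "x \<in> span M" by (rule span_base)
      then show "r \<bullet> x = 0" using r by (simp add: orthogonal_def)
    qed
    ultimately show ?thesis by (simp add: W_iff)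
  qed
  have "z \<bullet> r = 0" using assms(2)[OF rW] .
  moreover have "y \<bullet> r = 0" using r[of y] y by (simp add: orthogonal_def inner_commute)
  ultimately have "r \<bullet> r = 0" using zyr by (simp add: inner_add_left)
  then have "r = 0" by simp
  then show ?thesis using zyr yM by simp
qed

lemma p_VS: "p \<in> VS S" using M_VS[OF pM] .
lemma p_nonneg: "nonneg p"
  unfolding nonneg_def
proof
  fix i show "0 \<le> p $ i"
  proof (cases "i \<in> S")
    case True then show ?thesis using ppos by (simp add: less_imp_le)
  next
    case False then show ?thesis using p_VS by (simp add: VS_iff)
  qed
qed
lemma p_ne: "p \<noteq> 0"
proof -
  obtain i where "i \<in> S" using Sne by blast
  then show ?thesis using ppos by (metis less_irrefl zero_index)
qed

definition x0 where "x0 = (1 / nrm p) *\<^sub>R p"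

lemma C_iff: "x \<in> C \<longleftrightarrow> x \<in> M \<and> nonneg x" by (simp add: C_def)
lemma C_KS: "x \<in> C \<Longrightarrow> x \<in> KS S" using M_VS by (auto simp: C_def KS_def)
lemma C_scale: "x \<in> C \<Longrightarrow> c \<ge> 0 \<Longrightarrow> c *\<^sub>R x \<in> C"
  using subM by (auto simp: C_def nonneg_def subspace_scale)

lemma x0C: "x0 \<in> C" "nrm x0 = 1"
  using C_scale[of p "1 / nrm p"] p_nonneg pM nrm_normalize[OF p_ne] nrm_pos[OF p_ne]
  by (auto simp: x0_def C_def)

lemma x0pos: "i \<in> S \<Longrightarrow> x0 $ i > 0"
  using ppos nrm_pos[OF p_ne] by (simp add: x0_def)

lemma C_norm_bound: "nrm x = 1 \<Longrightarrow> norm x \<le> 1 / cn" using norm_le_nrm[of x] by simp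

lemma norming: assumes z: "z \<in> VS S" "z \<noteq> 0" shows "\<exists>q\<in>VS S. Nd q \<le> 1 \<and> q \<bullet> z = nrm z"
proof -
  define z0 where "z0 = (1 / nrm z) *\<^sub>R z"
  have nz0: "nrm z0 = 1" using nrm_normalize[OF z(2)] by (simp add: z0_def)
  define T where "T = {x. nrm x < 1}"
  have cT: "convex T"
    unfolding convex_def T_def
  proof (intro allI impI ballI, clarify)
    fix x y :: "real^'n" and u v :: real
    assume as: "nrm x < 1" "nrm y < 1" "0 \<le> u" "0 \<le> v" "u + v = 1"
    have "nrm (u *\<^sub>R x + v *\<^sub>R y) \<le> nrm (u *\<^sub>R x) + nrm (v *\<^sub>R y)" by (rule nb(5))
    also have "\<dots> = u * nrm x + v * nrm y" using as nb(4) by simp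
    also have "\<dots> < 1"
    proof (cases "u = 0")
      case True then show ?thesis using as by simp
    next
      case False
      then have "u * nrm x < u * 1" using as by simp
      moreover have "v * nrm y \<le> v * 1" using as by (intro mult_left_mono) auto
      ultimately show ?thesis using as by simp
    qed
    finally show "nrm (u *\<^sub>R x + v *\<^sub>R y) < 1" .
  qed
  have T0: "0 \<in> T" using nb(1) by (simp add: T_def)
  have disj: "{z0} \<inter> T = {}" using nz0 by (simp add: T_def)
  obtain a b where a: "a \<noteq> 0" "\<forall>x\<in>{z0}. a \<bullet> x \<le> b" "\<forall>x\<in>T. a \<bullet> x \<ge> b"
    using separating_hyperplane_sets[of "{z0}" T] cT disj T0 by auto
  define g where "g = - a"
  have gT: "g \<bullet> x \<le> g \<bullet> z0" if "x \<in> T" for x using a that by (auto simp: g_def)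
  have gne: "g \<noteq> 0" using a(1) by (simp add: g_def)
  define \<alpha> where "\<alpha> = g \<bullet> z0"
  have apos: "\<alpha> > 0"
  proof -
    define x1 where "x1 = (1 / (2 * nrm g)) *\<^sub>R g"
    have pg: "nrm g > 0" using nrm_pos[OF gne] .
    have "nrm x1 = 1/2" using pg nb(4)[of "1 / (2 * nrm g)" g] by (simp add: x1_def)
    then have "x1 \<in> T" by (simp add: T_def)
    then have "g \<bullet> x1 \<le> \<alpha>" using gT by (simp add: \<alpha>_def)
    moreover have "g \<bullet> x1 = (g \<bullet> g) / (2 * nrm g)" by (simp add: x1_def)
    moreover have "g \<bullet> g > 0" using gne by simp
    ultimately show ?thesis using pg by (smt (verit) divide_pos_pos)
  qed
  have gx: "g \<bullet> x \<le> \<alpha>" if "nrm x = 1" for x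
  proof (rule ccontr)
    assume "\<not> g \<bullet> x \<le> \<alpha>"
    then have gt: "g \<bullet> x > \<alpha>" by simp
    define s where "s = (1 + \<alpha> / (g \<bullet> x)) / 2"
    have gxpos: "g \<bullet> x > 0" using gt apos by simp
    have s1: "s < 1" "s > 0" using gt gxpos apos by (simp_all add: s_def field_simps)
    then have "nrm (s *\<^sub>R x) < 1" using that nb(4)[of s x] by simp
    then have "s *\<^sub>R x \<in> T" by (simp add: T_def)
    from gT[OF this] have "g \<bullet> (s *\<^sub>R x) \<le> \<alpha>" by (simp only: \<alpha>_def)
    moreover have "g \<bullet> (s *\<^sub>R x) = (g \<bullet> x + \<alpha>) / 2" using gxpos by (simp add: s_def field_simps)
    ultimately show False using gt by simp
  qed
  define q where "q = rs S ((1 / \<alpha>) *\<^sub>R g)"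
  have qV: "q \<in> VS S" by (simp add: q_def rs_VS)
  have "Nd q \<le> 1"
  proof (rule N2)
    fix x assume x: "x \<in> VS S" "nrm x = 1"
    have "q \<bullet> x = (g \<bullet> x) / \<alpha>" using rs_inner[OF x(1)] by (simp add: q_def)
    also have "\<dots> \<le> 1" using gx[OF x(2)] apos by simp
    finally show "q \<bullet> x \<le> 1" .
  qed
  moreover have "q \<bullet> z = nrm z"
  proof -
    have zz: "z = nrm z *\<^sub>R z0" using nrm_pos[OF z(2)] by (simp add: z0_def)
    have "q \<bullet> z = (g \<bullet> z) / \<alpha>" using rs_inner[OF z(1)] by (simp add: q_def)
    also have "g \<bullet> z = nrm z * \<alpha>" by (subst zz) (simp add: \<alpha>_def)
    finally show ?thesis using apos by simp
  qed
  ultimately show ?thesis using qV by blast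
qed

end



context GTset begin

lemma W_zero: "0 \<in> W" using subW by (rule subspace_0)
lemma W_scale: "w \<in> W \<Longrightarrow> c *\<^sub>R w \<in> W" using subW by (simp add: subspace_scale)
lemma W_add: "w \<in> W \<Longrightarrow> w' \<in> W \<Longrightarrow> w + w' \<in> W" using subW by (simp add: subspace_add)

lemma H:
  assumes U: "U \<subseteq> KS S" "convex U" "U \<noteq> {}" and r: "r \<ge> 0" and dl: "\<delta> > 0"
    and hyp: "\<And>x. x \<in> C \<Longrightarrow> nrm x = 1 \<Longrightarrow> \<exists>u\<in>U. u \<bullet> x \<le> r"
  shows "\<exists>u\<in>U. \<exists>z\<in>KS S. \<exists>y\<in>W. Nd (u + z - y) \<le> r + \<delta>"
proof (rule ccontr)
  assume neg: "\<not> ?thesis"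
  define D where "D = {u + z - y | u z y. u \<in> U \<and> z \<in> KS S \<and> y \<in> W}"
  define Q where "Q = {d \<in> VS S. \<forall>x\<in>VS S. nrm x = 1 \<longrightarrow> d \<bullet> x \<le> r}"
  have DV: "D \<subseteq> VS S"
  proof
    fix d assume "d \<in> D"
    then obtain u z y where d: "d = u + z - y" "u \<in> U" "z \<in> KS S" "y \<in> W" by (auto simp: D_def)
    have "u \<in> KS S" using d(2) U(1) by blast
    then show "d \<in> VS S" using VS_diff[OF VS_add[OF KS_VS[OF \<open>u \<in> KS S\<close>] KS_VS[OF d(3)]] W_VS[OF d(4)]] d(1) by simp
  qed
  have cD: "convex D"
    unfolding convex_def
  proof (intro allI impI ballI)
    fix d1 d2 and a b :: real assume d: "d1 \<in> D" "d2 \<in> D" and ab: "0 \<le> a" "0 \<le> b" "a + b = 1"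
    obtain u1 z1 y1 where 1: "d1 = u1 + z1 - y1" "u1 \<in> U" "z1 \<in> KS S" "y1 \<in> W" using d(1) by (auto simp: D_def)
    obtain u2 z2 y2 where 2: "d2 = u2 + z2 - y2" "u2 \<in> U" "z2 \<in> KS S" "y2 \<in> W" using d(2) by (auto simp: D_def)
    have "a *\<^sub>R d1 + b *\<^sub>R d2 = (a *\<^sub>R u1 + b *\<^sub>R u2) + (a *\<^sub>R z1 + b *\<^sub>R z2) - (a *\<^sub>R y1 + b *\<^sub>R y2)"
      unfolding 1(1) 2(1) by (simp add: algebra_simps)
    moreover have "a *\<^sub>R u1 + b *\<^sub>R u2 \<in> U" using U(2) 1 2 ab unfolding convex_def by blast
    moreover have "a *\<^sub>R z1 + b *\<^sub>R z2 \<in> KS S" using 1 2 ab by (intro KS_add KS_scale) auto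
    moreover have "a *\<^sub>R y1 + b *\<^sub>R y2 \<in> W" using 1 2 by (intro W_add W_scale)
    ultimately show "a *\<^sub>R d1 + b *\<^sub>R d2 \<in> D" unfolding D_def by blast
  qed
  have Q0: "0 \<in> Q" using r by (simp add: Q_def subspace_0[OF subVS])
  have cQ: "convex Q"
    unfolding convex_def Q_def
  proof (intro allI impI ballI CollectI conjI)
    fix d1 d2 and a b :: real
    assume d: "d1 \<in> {d \<in> VS S. \<forall>x\<in>VS S. nrm x = 1 \<longrightarrow> d \<bullet> x \<le> r}" "d2 \<in> {d \<in> VS S. \<forall>x\<in>VS S. nrm x = 1 \<longrightarrow> d \<bullet> x \<le> r}"
      and ab: "0 \<le> a" "0 \<le> b" "a + b = 1"
    show "a *\<^sub>R d1 + b *\<^sub>R d2 \<in> VS S" using d by (intro VS_add VS_scale) auto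
    fix x assume x: "x \<in> VS S" "nrm x = 1"
    have "d1 \<bullet> x \<le> r" "d2 \<bullet> x \<le> r" using d x by auto
    then have "a * (d1 \<bullet> x) + b * (d2 \<bullet> x) \<le> a * r + b * r" using ab by (intro add_mono mult_left_mono) auto
    moreover have "a * r + b * r = r" using ab(3) by (metis distrib_right mult_1)
    ultimately show "(a *\<^sub>R d1 + b *\<^sub>R d2) \<bullet> x \<le> r" by (simp add: inner_add_left)
  qed
  have Qb: "Q \<subseteq> cball 0 (r * Kn)"
  proof
    fix d assume d: "d \<in> Q"
    show "d \<in> cball 0 (r * Kn)"
    proof (cases "d = 0")
      case True then show ?thesis using r Kn(1) by simp
    next
      case False
      let ?x = "(1 / nrm d) *\<^sub>R d"
      have "?x \<in> VS S" "nrm ?x = 1" using d False VS_scale nrm_normalize by (auto simp: Q_def)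
      then have "d \<bullet> ?x \<le> r" using d by (auto simp: Q_def)
      then have "(d \<bullet> d) / nrm d \<le> r" by simp
      then have "norm d ^ 2 \<le> r * nrm d" using nrm_pos[OF False] by (simp add: divide_le_eq power2_norm_eq_inner)
      also have "\<dots> \<le> r * (Kn * norm d)" using Kn(2)[of d] r by (intro mult_left_mono) auto
      finally have "norm d * norm d \<le> (r * Kn) * norm d" by (simp add: power2_eq_square algebra_simps)
      then have "norm d \<le> r * Kn" using False by simp
      then show ?thesis by simp
    qed
  qed
  have clQ: "closed Q"
  proof -
    have "Q = VS S \<inter> (\<Inter>x\<in>{x \<in> VS S. nrm x = 1}. {d. inner x d \<le> r})"
      by (auto simp: Q_def inner_commute)
    moreover have "closed (VS S)" by (rule closed_subspace[OF subVS])
    moreover have "closed {d. inner x d \<le> r}" for x by (rule closed_halfspace_le)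
    ultimately show ?thesis by (auto intro!: closed_Int closed_INT)
  qed
  have kQ: "compact Q" using Qb clQ by (metis bounded_cball bounded_subset compact_eq_bounded_closed)
  have disj: "Q \<inter> closure D = {}"
  proof (rule ccontr)
    assume "Q \<inter> closure D \<noteq> {}"
    then obtain d where d: "d \<in> Q" "d \<in> closure D" by blast
    have Nd_d: "Nd d \<le> r" using d(1) by (intro N2) (auto simp: Q_def)
    have "cn * \<delta> > 0" using cn(1) dl by simp
    then obtain d' where d': "d' \<in> D" "dist d' d < cn * \<delta>" using d(2) unfolding closure_approachable by blast
    have "Nd d' \<le> Nd d + norm (d' - d) / cn" by (rule N_lip)
    also have "norm (d' - d) / cn < \<delta>" using d'(2) cn(1) by (simp add: dist_norm divide_less_eq mult.commute)
    finally have "Nd d' < r + \<delta>" using Nd_d by simp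
    then show False using neg d'(1) unfolding D_def by fastforce
  qed
  obtain a b where ab: "\<forall>x\<in>Q. a \<bullet> x < b" "\<forall>x\<in>closure D. a \<bullet> x > b"
    using separating_hyperplane_compact_closed[OF cQ kQ _ convex_closure[OF cD] closed_closure disj] Q0 by blast
  define a' where "a' = rs S a"
  have aD: "a' \<bullet> d > b" if "d \<in> D" for d
  proof -
    have "d \<in> VS S" using DV that by blast
    then have "a' \<bullet> d = a \<bullet> d" using rs_inner[of d S a] by (simp add: a'_def)
    moreover have "d \<in> closure D" using closure_subset[of D] that by blast
    ultimately show ?thesis using ab(2) by simp
  qed
  have b0: "b > 0" using ab(1) Q0 by force
  obtain u0 where u0: "u0 \<in> U" using U(3) by blast
  have a'nn: "0 \<le> a' $ i" if "i \<in> S" for i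
  proof (rule lin1[where a="a' \<bullet> u0" and b=b and c="a' $ i"])
    fix t :: real assume t: "t \<ge> 0"
    have "u0 + t *\<^sub>R axis i 1 - 0 \<in> D" unfolding D_def using u0 t KS_scale[OF KS_axis[OF that] t] W_zero by blast
    then have "a' \<bullet> (u0 + t *\<^sub>R axis i 1) > b" using aD by fastforce
    then show "a' \<bullet> u0 + t * a' $ i > b" by (simp add: inner_add_right inner_axis)
  qed
  have a'W: "a' \<bullet> w = 0" if "w \<in> W" for w
  proof (rule lin2[where a="a' \<bullet> u0" and b=b])
    fix t :: real
    have "u0 + 0 - t *\<^sub>R w \<in> D" unfolding D_def using u0 KS_zero W_scale[OF that] by blast
    then have "a' \<bullet> (u0 + 0 - t *\<^sub>R w) > b" using aD by blast
    then show "a' \<bullet> u0 - t * (a' \<bullet> w) > b" by (simp add: inner_diff_right)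
  qed
  have a'V: "a' \<in> VS S" by (simp add: a'_def rs_VS)
  have a'M: "a' \<in> M" using perpM[OF a'V] a'W by blast
  have a'C: "a' \<in> C"
    unfolding C_iff nonneg_def using a'M a'nn a'V by (auto simp: VS_iff) (metis order_refl)
  have u0D: "u0 \<in> D" unfolding D_def using u0 KS_zero W_zero by force
  have a'ne: "a' \<noteq> 0" using aD[OF u0D] b0 by auto
  obtain q where q: "q \<in> VS S" "Nd q \<le> 1" "q \<bullet> a' = nrm a'" using norming[OF a'V a'ne] by blast
  have rqQ: "r *\<^sub>R q \<in> Q"
    unfolding Q_def
  proof (intro CollectI conjI ballI impI)
    show "r *\<^sub>R q \<in> VS S" using q(1) by (rule VS_scale)
    fix x assume x: "x \<in> VS S" "nrm x = 1"
    have "q \<bullet> x \<le> Nd q" using N1[OF x(1), of q] x(2) by simp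
    then have "q \<bullet> x \<le> 1" using q(2) by simp
    then show "r *\<^sub>R q \<bullet> x \<le> r" using r by (simp add: mult_left_le)
  qed
  have e1: "a' \<bullet> q = a \<bullet> q" using rs_inner[OF q(1), of a] by (simp add: a'_def)
  have "a \<bullet> (r *\<^sub>R q) < b" using ab(1) rqQ by blast
  then have "r * (a \<bullet> q) < b" by simp
  then have rb: "r * nrm a' < b" using e1 q(3) by (simp add: inner_commute)

  define x where "x = (1 / nrm a') *\<^sub>R a'"
  have xC: "x \<in> C" "nrm x = 1" using C_scale[OF a'C, of "1 / nrm a'"] nrm_pos[OF a'ne] nrm_normalize[OF a'ne]
    by (auto simp: x_def)
  obtain u where u: "u \<in> U" "u \<bullet> x \<le> r" using hyp[OF xC] by blast
  have uD: "u \<in> D" unfolding D_def using u(1) KS_zero W_zero by force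
  have "a' \<bullet> u > b" using aD[OF uD] .
  moreover have "u \<bullet> x = (a' \<bullet> u) / nrm a'" by (simp add: x_def inner_commute)
  ultimately have "u \<bullet> x > b / nrm a'" using nrm_pos[OF a'ne] by (simp add: divide_strict_right_mono)
  moreover have "b / nrm a' > r" using rb nrm_pos[OF a'ne] by (simp add: less_divide_eq)
  ultimately show False using u(2) by simp
qed

end



definition oneS :: "'n set \<Rightarrow> real^'n" where "oneS S = (\<chi> i. if i \<in> S then 1 else 0)"

lemma norm_inf_ge: "\<bar>x $ i\<bar> \<le> norm_inf (x::real^'n::finite)"
  unfolding norm_inf_def by (rule Max_ge) auto

lemma norm_inf_oneS: assumes "S \<noteq> {}" shows "norm_inf (oneS S :: real^'n::finite) = 1"
  unfolding norm_inf_def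
proof (rule Max_eqI)
  show "finite (range (\<lambda>i. \<bar>oneS S $ i\<bar>))" by simp
  fix y assume "y \<in> range (\<lambda>i. \<bar>(oneS S :: real^'n) $ i\<bar>)" then show "y \<le> 1" by (auto simp: oneS_def)
next
  obtain j where "j \<in> S" using assms by blast
  then show "1 \<in> range (\<lambda>i. \<bar>(oneS S :: real^'n) $ i\<bar>)" by (auto simp: oneS_def image_iff intro!: exI[of _ j])
qed

lemma oneS_KS: "oneS S \<in> KS S" by (auto simp: oneS_def KS_iff)

lemma inner_KS_sum: "u \<in> KS S \<Longrightarrow> u \<bullet> x = (\<Sum>i\<in>S. u$i * x$i)"
  using inner_VS[OF KS_VS] .

lemma T_inf: assumes "S \<noteq> {}" "u \<in> KS S"
  shows "dualV S norm_inf u = (\<Sum>i\<in>S. u $ i)"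
  unfolding dualV_def
proof (rule cSup_eq_maximum)
  have "oneS S \<in> VS S" using KS_VS[OF oneS_KS] .
  moreover have "u \<bullet> oneS S = (\<Sum>i\<in>S. u $ i)" using inner_KS_sum[OF assms(2)] by (simp add: oneS_def)
  ultimately show "(\<Sum>i\<in>S. u $ i) \<in> {u \<bullet> x |x. x \<in> VS S \<and> norm_inf x = 1}"
    using norm_inf_oneS[OF assms(1)] by (metis (mono_tags, lifting) mem_Collect_eq)
  fix y assume "y \<in> {u \<bullet> x |x. x \<in> VS S \<and> norm_inf x = 1}"
  then obtain x where x: "y = u \<bullet> x" "norm_inf x = 1" by blast
  have "u \<bullet> x = (\<Sum>i\<in>S. u$i * x$i)" using inner_KS_sum[OF assms(2)] .
  also have "\<dots> \<le> (\<Sum>i\<in>S. u$i)"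
  proof (rule sum_mono)
    fix i assume "i \<in> S"
    have "x $ i \<le> 1" using norm_inf_ge[of x i] x(2) by simp
    moreover have "u $ i \<ge> 0" using assms(2) by (simp add: KS_iff)
    ultimately show "u$i * x$i \<le> u$i" by (simp add: mult_left_le)
  qed
  finally show "y \<le> (\<Sum>i\<in>S. u $ i)" using x(1) by simp
qed

lemma T_one: assumes "S \<noteq> {}" "u \<in> KS S"
  shows "dualV S norm_one u = Max ((\<lambda>i. u $ i) ` (S::'n::finite set))"
  unfolding dualV_def
proof (rule cSup_eq_maximum)
  let ?m = "Max ((\<lambda>i. u $ i) ` S)"
  have "?m \<in> (\<lambda>i. u $ i) ` S" by (rule Max_in) (use assms(1) in auto)
  then obtain j where j: "j \<in> S" "u $ j = ?m" by (metis (no_types, lifting) imageE)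
  have "axis j (1::real) \<in> VS S" using j(1) by (simp add: VS_iff axis_def)
  moreover have "norm_one (axis j (1::real) :: real^'n) = 1"
  proof -
    have "\<And>i. \<bar>axis j (1::real) $ i\<bar> = (if i = j then 1 else 0)" by (simp add: axis_def)
    then have "norm_one (axis j (1::real) :: real^'n) = (\<Sum>i\<in>UNIV. if i = j then 1 else 0)"
      by (simp add: norm_one_def)
    also have "\<dots> = 1" by (simp add: sum.delta)
    finally show ?thesis .
  qed
  moreover have "u \<bullet> axis j 1 = ?m" using j(2) by (simp add: inner_axis)
  ultimately show "?m \<in> {u \<bullet> x |x. x \<in> VS S \<and> norm_one x = 1}" by (metis (mono_tags, lifting) mem_Collect_eq)
  have m0: "?m \<ge> 0" using j assms(2) by (metis KS_iff)
  fix y assume "y \<in> {u \<bullet> x |x. x \<in> VS S \<and> norm_one x = 1}"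
  then obtain x where x: "y = u \<bullet> x" "norm_one x = 1" by blast
  have "u \<bullet> x = (\<Sum>i\<in>S. u$i * x$i)" using inner_KS_sum[OF assms(2)] .
  also have "\<dots> \<le> (\<Sum>i\<in>S. ?m * \<bar>x$i\<bar>)"
  proof (rule sum_mono)
    fix i assume i: "i \<in> S"
    have "u $ i \<ge> 0" using assms(2) by (simp add: KS_iff)
    moreover have "u $ i \<le> ?m" using i by simp
    ultimately have "u$i * x$i \<le> u$i * \<bar>x$i\<bar>" by (simp add: mult_left_mono)
    also have "\<dots> \<le> ?m * \<bar>x$i\<bar>" using \<open>u $ i \<le> ?m\<close> by (simp add: mult_right_mono)
    finally show "u$i * x$i \<le> ?m * \<bar>x$i\<bar>" .
  qed
  also have "\<dots> \<le> (\<Sum>i\<in>UNIV. ?m * \<bar>x$i\<bar>)" using m0 by (intro sum_mono2) auto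
  also have "\<dots> = ?m" using x(2) by (simp add: norm_one_def sum_distrib_left[symmetric])
  finally show "y \<le> ?m" using x(1) by simp
qed

lemma T_two: assumes "S \<noteq> {}" "u \<in> VS S"
  shows "dualV S norm u = norm u"
  unfolding dualV_def
proof (rule cSup_eq_maximum)
  show "norm u \<in> {u \<bullet> x |x. x \<in> VS S \<and> norm x = 1}"
  proof (cases "u = 0")
    case True
    obtain j where "j \<in> S" using assms(1) by blast
    then have "axis j (1::real) \<in> VS S" by (simp add: VS_iff axis_def)
    then show ?thesis using True by (intro CollectI exI[of _ "axis j 1"]) simp
  next
    case False
    have "(1 / norm u) *\<^sub>R u \<in> VS S" using assms(2) by (simp add: VS_iff)
    moreover have "u \<bullet> ((1 / norm u) *\<^sub>R u) = norm u" using False by (simp add: dot_square_norm power2_eq_square)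
    moreover have "norm ((1 / norm u) *\<^sub>R u) = 1" using False by simp
    ultimately show ?thesis by (metis (mono_tags, lifting) mem_Collect_eq)
  qed
  fix y assume "y \<in> {u \<bullet> x |x. x \<in> VS S \<and> norm x = 1}"
  then obtain x where x: "y = u \<bullet> x" "norm x = 1" by blast
  then show "y \<le> norm u" using Cauchy_Schwarz_ineq2[of u x] by simp
qed

context GTset begin

definition NS where "NS tnrm = {Nd (u - y) | u y. u \<in> KS S \<and> y \<in> W \<and> dualV S tnrm u = 1}"

lemma nu_eq: "nuV S nrm tnrm M = Inf (NS tnrm)"
  unfolding nuV_def NS_def W_def by simp

lemma NS_bdd: "bdd_below (NS tnrm)"
  unfolding NS_def bdd_below_def using N_nonneg by blast

lemma nu_lower:
  assumes "NS tnrm \<noteq> {}"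
    and "\<And>u y. u \<in> KS S \<Longrightarrow> y \<in> W \<Longrightarrow> dualV S tnrm u = 1 \<Longrightarrow> \<rho> \<le> Nd (u - y)"
  shows "\<rho> \<le> nuV S nrm tnrm M"
  unfolding nu_eq using assms(1) by (rule cInf_greatest) (auto simp: NS_def assms(2))

lemma nu_upper:
  assumes "u \<in> KS S" "y \<in> W" "dualV S tnrm u = 1"
  shows "nuV S nrm tnrm M \<le> Nd (u - y)"
  unfolding nu_eq by (rule cInf_lower[OF _ NS_bdd]) (use assms in \<open>auto simp: NS_def\<close>)

lemma key_lower:
  assumes "u \<in> KS S" "y \<in> W" "x \<in> C" "nrm x = 1"
  shows "u \<bullet> x \<le> Nd (u - y)"
proof -
  have xV: "x \<in> VS S" using C_KS[OF assms(3)] KS_VS by blast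
  have "(u - y) \<bullet> x \<le> Nd (u - y) * nrm x" by (rule N1[OF xV])
  moreover have "y \<bullet> x = 0" using W_perp[OF assms(2)] assms(3) by (simp add: C_def)
  ultimately show ?thesis using assms(4) by (simp add: inner_diff_left)
qed

lemma nu_scale:
  assumes "u \<in> KS S" "y \<in> W" "t \<ge> 1" "dualV S tnrm ((1 / t) *\<^sub>R u) = 1"
  shows "nuV S nrm tnrm M \<le> Nd (u - y)"
proof -
  have "nuV S nrm tnrm M \<le> Nd ((1 / t) *\<^sub>R u - (1 / t) *\<^sub>R y)"
    using assms by (intro nu_upper KS_scale W_scale) auto
  also have "(1 / t) *\<^sub>R u - (1 / t) *\<^sub>R y = (1 / t) *\<^sub>R (u - y)" by (simp add: algebra_simps)
  also have "Nd \<dots> \<le> (1 / t) * Nd (u - y)" using assms(3) by (intro N_scale_le) simp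
  also have "\<dots> \<le> Nd (u - y)" using assms(3) N_nonneg[of "u - y"] by (simp add: divide_le_eq_1 mult_le_cancel_right1 field_simps)
  finally show ?thesis .
qed

lemma nu_le_eps:
  fixes r :: real
  assumes "\<And>\<delta>. \<delta> > 0 \<Longrightarrow> nuV S nrm tnrm M \<le> r + \<delta>"
  shows "nuV S nrm tnrm M \<le> r"
  using assms by (metis field_le_epsilon)

end



context GTset begin

definition sv where "sv v = Sup {lamV S v x | x. x \<in> M \<and> nrm x \<le> 1}"

lemma sigma_eq: "sigmaV S nrm tnrm M = Inf {sv v | v. v \<in> KS S \<and> tnrm v = 1}"
  unfolding sigmaV_def sv_def by simp

lemma lam_ge: "x - t *\<^sub>R v \<in> KS S \<Longrightarrow> ereal t \<le> lamV S v x"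
  unfolding lamV_def by (rule Sup_upper) blast

lemma lam_le: "(\<And>t. x - t *\<^sub>R v \<in> KS S \<Longrightarrow> t \<le> r) \<Longrightarrow> lamV S v x \<le> ereal r"
  unfolding lamV_def by (rule Sup_least) auto

lemma sv_ge: "x \<in> M \<Longrightarrow> nrm x \<le> 1 \<Longrightarrow> x - t *\<^sub>R v \<in> KS S \<Longrightarrow> ereal t \<le> sv v"
proof -
  assume a: "x \<in> M" "nrm x \<le> 1" "x - t *\<^sub>R v \<in> KS S"
  have "ereal t \<le> lamV S v x" using lam_ge[OF a(3)] .
  also have "\<dots> \<le> sv v" unfolding sv_def by (rule Sup_upper) (use a in blast)
  finally show ?thesis .
qed

lemma sv_le: "(\<And>x t. x \<in> M \<Longrightarrow> nrm x \<le> 1 \<Longrightarrow> x - t *\<^sub>R v \<in> KS S \<Longrightarrow> t \<le> r) \<Longrightarrow> sv v \<le> ereal r"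
  unfolding sv_def by (rule Sup_least) (auto intro!: lam_le)

lemma sigma_le: "v \<in> KS S \<Longrightarrow> tnrm v = 1 \<Longrightarrow> sv v \<le> e \<Longrightarrow> sigmaV S nrm tnrm M \<le> e"
  unfolding sigma_eq by (rule Inf_lower2[of "sv v"]) auto

lemma sigma_ge: "(\<And>v. v \<in> KS S \<Longrightarrow> tnrm v = 1 \<Longrightarrow> e \<le> sv v) \<Longrightarrow> e \<le> sigmaV S nrm tnrm M"
  unfolding sigma_eq by (rule Inf_greatest) auto

lemma normalize_C:
  assumes "x \<in> M" "nonneg x" "x \<noteq> 0"
  shows "(1 / nrm x) *\<^sub>R x \<in> C" "nrm ((1 / nrm x) *\<^sub>R x) = 1"
  using C_scale[of x "1 / nrm x"] assms nrm_pos[OF assms(3)] nrm_normalize[OF assms(3)] by (auto simp: C_def)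

lemma C_nonneg: "x \<in> C \<Longrightarrow> 0 \<le> x $ i" by (simp add: C_def nonneg_def)
lemma C_VS: "x \<in> C \<Longrightarrow> x \<in> VS S" using C_KS KS_VS by blast
lemma C_M: "x \<in> C \<Longrightarrow> x \<in> M" by (simp add: C_def)

lemma comp_bound: "x \<in> C \<Longrightarrow> nrm x = 1 \<Longrightarrow> x $ i \<le> 1 / cn"
  using C_norm_bound[of x] component_le_norm_cart[of x i] by simp

lemma KS_nonneg_sub: "x \<in> M \<Longrightarrow> x - t *\<^sub>R v \<in> KS S \<Longrightarrow> v \<in> KS S \<Longrightarrow> t \<ge> 0 \<Longrightarrow> nonneg x"
proof -
  assume a: "x \<in> M" "x - t *\<^sub>R v \<in> KS S" "v \<in> KS S" "t \<ge> 0"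
  show "nonneg x" unfolding nonneg_def
  proof
    fix i
    have "0 \<le> x $ i - t * v $ i" using a(2) by (simp add: KS_iff)
    moreover have "0 \<le> t * v $ i" using a(3,4) by (simp add: KS_iff)
    ultimately show "0 \<le> x $ i" by simp
  qed
qed

subsection \<open>Case (a): tnrm = norm_inf\<close>

definition mn where "mn x = Min ((\<lambda>i. x $ i) ` S)"
definition RA where "RA = {mn x | x. x \<in> C \<and> nrm x = 1}"
definition Ra where "Ra = Sup RA"

lemma finS: "finite S" by simp

lemma mn_le: "i \<in> S \<Longrightarrow> mn x \<le> x $ i" unfolding mn_def by (rule Min_le) auto
lemma mn_in: "\<exists>i\<in>S. mn x = x $ i"
proof -
  have "mn x \<in> (\<lambda>i. x $ i) ` S" unfolding mn_def by (rule Min_in) (use Sne in auto)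
  then show ?thesis by auto
qed
lemma mn_ge: "(\<And>i. i \<in> S \<Longrightarrow> t \<le> x $ i) \<Longrightarrow> t \<le> mn x"
  unfolding mn_def using Sne by (simp add: Min_ge_iff)

lemma RA_ne: "RA \<noteq> {}" using x0C unfolding RA_def by blast
lemma RA_bdd: "bdd_above RA"
proof -
  obtain i where i: "i \<in> S" using Sne by blast
  have "y \<le> 1 / cn" if yR: "y \<in> RA" for y
  proof -
    obtain x where x: "y = mn x" "x \<in> C" "nrm x = 1" using yR unfolding RA_def by blast
    have "mn x \<le> x $ i" by (rule mn_le[OF i])
    also have "\<dots> \<le> 1 / cn" by (rule comp_bound[OF x(2,3)])
    finally show ?thesis using x(1) by simp
  qed
  then show ?thesis unfolding bdd_above_def by blast
qed
lemma RA_upper: "x \<in> C \<Longrightarrow> nrm x = 1 \<Longrightarrow> mn x \<le> Ra"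
  unfolding Ra_def by (rule cSup_upper[OF _ RA_bdd]) (auto simp: RA_def)
lemma Ra_pos: "Ra > 0"
proof -
  have "mn x0 > 0" using mn_in[of x0] x0pos by force
  then show ?thesis using RA_upper[OF x0C] by simp
qed

lemma nu_A: "nuV S nrm norm_inf M = Ra"
proof (rule antisym)
  obtain j where j: "j \<in> S" using Sne by blast
  have axS: "(\<Sum>i\<in>S. axis j (1::real) $ i) = 1" using j by (simp add: axis_def sum.delta)
  show "Ra \<le> nuV S nrm norm_inf M"
  proof (rule nu_lower)
    have "dualV S norm_inf (axis j 1) = 1" using T_inf[OF Sne KS_axis[OF j]] axS by simp
    then show "NS norm_inf \<noteq> {}" unfolding NS_def using W_zero KS_axis[OF j] by blast
  next
    fix u y assume uy: "u \<in> KS S" "y \<in> W" "dualV S norm_inf u = 1"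
    have su: "(\<Sum>i\<in>S. u $ i) = 1" using T_inf[OF Sne uy(1)] uy(3) by simp
    show "Ra \<le> Nd (u - y)" unfolding Ra_def
    proof (rule cSup_least[OF RA_ne])
      fix m assume "m \<in> RA"
      then obtain x where x: "m = mn x" "x \<in> C" "nrm x = 1" by (auto simp: RA_def)
      have "mn x = (\<Sum>i\<in>S. u $ i * mn x)" using su by (simp add: sum_distrib_right[symmetric])
      also have "\<dots> \<le> (\<Sum>i\<in>S. u $ i * x $ i)"
        using uy(1) mn_le by (intro sum_mono mult_left_mono) (auto simp: KS_iff)
      also have "\<dots> = u \<bullet> x" using inner_KS_sum[OF uy(1)] by simp
      also have "\<dots> \<le> Nd (u - y)" by (rule key_lower[OF uy(1,2) x(2,3)])
      finally show "m \<le> Nd (u - y)" using x(1) by simp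
    qed
  qed
  show "nuV S nrm norm_inf M \<le> Ra"
  proof (rule nu_le_eps)
    fix \<delta> :: real assume dl: "\<delta> > 0"
    define U where "U = {u \<in> KS S. (\<Sum>i\<in>S. u $ i) = 1}"
    have UK: "U \<subseteq> KS S" by (auto simp: U_def)
    have cU: "convex U"
      unfolding convex_def U_def
    proof (intro ballI allI impI CollectI conjI)
      fix u1 u2 and a b :: real
      assume u: "u1 \<in> {u \<in> KS S. (\<Sum>i\<in>S. u $ i) = 1}" "u2 \<in> {u \<in> KS S. (\<Sum>i\<in>S. u $ i) = 1}"
        and ab: "0 \<le> a" "0 \<le> b" "a + b = 1"
      show "a *\<^sub>R u1 + b *\<^sub>R u2 \<in> KS S" using u ab by (intro KS_add KS_scale) auto
      have "(\<Sum>i\<in>S. (a *\<^sub>R u1 + b *\<^sub>R u2) $ i) = a * (\<Sum>i\<in>S. u1 $ i) + b * (\<Sum>i\<in>S. u2 $ i)"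
        by (simp add: sum.distrib sum_distrib_left)
      then show "(\<Sum>i\<in>S. (a *\<^sub>R u1 + b *\<^sub>R u2) $ i) = 1" using u ab by simp
    qed
    have Une: "U \<noteq> {}" using axS KS_axis[OF j] unfolding U_def by blast
    have hyp: "\<exists>u\<in>U. u \<bullet> x \<le> Ra" if x: "x \<in> C" "nrm x = 1" for x
    proof -
      obtain i where i: "i \<in> S" "mn x = x $ i" using mn_in by blast
      have "(\<Sum>k\<in>S. axis i (1::real) $ k) = 1" using i by (simp add: axis_def sum.delta)
      then have "axis i 1 \<in> U" using KS_axis[OF i(1)] by (simp add: U_def)
      moreover have "axis i 1 \<bullet> x = mn x" using i by (simp add: inner_axis' )
      ultimately show ?thesis using RA_upper[OF x] by metis
    qed
    obtain u z y where uzy: "u \<in> U" "z \<in> KS S" "y \<in> W" "Nd (u + z - y) \<le> Ra + \<delta>"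
      using H[OF UK cU Une less_imp_le[OF Ra_pos] dl hyp] by blast
    have uK: "u \<in> KS S" and su: "(\<Sum>i\<in>S. u $ i) = 1" using uzy(1) by (auto simp: U_def)
    define t where "t = (\<Sum>i\<in>S. (u + z) $ i)"
    have t1: "t \<ge> 1" using su uzy(2) unfolding t_def by (simp add: sum.distrib KS_iff sum_nonneg)
    have uzK: "u + z \<in> KS S" using KS_add[OF uK uzy(2)] .
    have "dualV S norm_inf ((1 / t) *\<^sub>R (u + z)) = (\<Sum>i\<in>S. ((1 / t) *\<^sub>R (u + z)) $ i)"
      by (rule T_inf[OF Sne KS_scale[OF uzK]]) (use t1 in simp)
    also have "\<dots> = (1 / t) * t" unfolding t_def by (simp add: sum_distrib_left)
    also have "\<dots> = 1" using t1 by simp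
    finally have "nuV S nrm norm_inf M \<le> Nd ((u + z) - y)" by (intro nu_scale[OF uzK uzy(3) t1])
    then show "nuV S nrm norm_inf M \<le> Ra + \<delta>" using uzy(4) by (simp add: algebra_simps)
  qed
qed

lemma sigma_A: "sigmaV S nrm norm_inf M = ereal Ra"
proof (rule antisym)
  show "sigmaV S nrm norm_inf M \<le> ereal Ra"
  proof (rule sigma_le[where v="oneS S" and tnrm=norm_inf, OF oneS_KS norm_inf_oneS[OF Sne]], rule sv_le)
    fix x t assume x: "x \<in> M" "nrm x \<le> 1" "x - t *\<^sub>R oneS S \<in> KS S"
    show "t \<le> Ra"
    proof (cases "t \<le> 0")
      case True then show ?thesis using Ra_pos by simp
    next
      case False
      have xi: "t \<le> x $ i" if "i \<in> S" for i
      proof -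
        have "0 \<le> (x - t *\<^sub>R oneS S) $ i" using x(3) unfolding KS_iff by blast
        then show ?thesis using that by (simp add: oneS_def)
      qed
      have nn: "nonneg x" using KS_nonneg_sub[OF x(1) x(3) oneS_KS] False by simp
      obtain j where j: "j \<in> S" using Sne by blast
      have xne: "x \<noteq> 0" using xi[OF j] False by auto
      have np: "nrm x > 0" using nrm_pos[OF xne] .
      let ?xn = "(1 / nrm x) *\<^sub>R x"
      have "t \<le> mn ?xn"
      proof (rule mn_ge)
        fix i assume i: "i \<in> S"
        have "x $ i \<le> x $ i / nrm x" using x(2) np nn by (simp add: nonneg_def le_divide_eq mult_left_le)
        then show "t \<le> ?xn $ i" using xi[OF i] by simp
      qed
      also have "\<dots> \<le> Ra" using RA_upper normalize_C[OF x(1) nn xne] by blast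
      finally show ?thesis .
    qed
  qed
  show "ereal Ra \<le> sigmaV S nrm norm_inf M"
  proof (rule sigma_ge)
    fix v assume v: "v \<in> KS S" "norm_inf v = 1"
    show "ereal Ra \<le> sv v"
    proof (rule ereal_le_epsilon2)
      fix e :: real assume e: "e > 0"
      have "Ra - e < Sup RA" using e by (simp add: Ra_def)
      then obtain m where m: "m \<in> RA" "Ra - e < m" using less_cSup_iff[OF RA_ne RA_bdd] by blast
      then obtain x where x: "m = mn x" "x \<in> C" "nrm x = 1" by (auto simp: RA_def)
      have m0: "mn x \<ge> 0" using mn_in[of x] C_nonneg[OF x(2)] by force
      have "x - mn x *\<^sub>R v \<in> KS S"
        unfolding KS_iff
      proof (intro conjI allI impI)
        fix i assume "i \<notin> S"
        then show "(x - mn x *\<^sub>R v) $ i = 0" using C_VS[OF x(2)] v(1) by (simp add: VS_iff KS_iff)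
      next
        fix i
        show "0 \<le> (x - mn x *\<^sub>R v) $ i"
        proof (cases "i \<in> S")
          case True
          have "v $ i \<le> 1" using norm_inf_ge[of v i] v(2) by simp
          then have "mn x * v $ i \<le> mn x" using m0 by (simp add: mult_left_le)
          then show ?thesis using mn_le[OF True, of x] by simp
        next
          case False
          then show ?thesis using C_VS[OF x(2)] v(1) by (simp add: VS_iff KS_iff)
        qed
      qed
      then have "ereal (mn x) \<le> sv v" using sv_ge[OF C_M[OF x(2)]] x(3) by simp
      moreover have "ereal Ra \<le> ereal (mn x) + ereal e" using m x(1) by simp
      ultimately show "ereal Ra \<le> sv v + ereal e" by (metis add_right_mono order_trans)
    qed
  qed
qed

end



lemma norm_one_axis: "norm_one (axis j (1::real) :: real^'n::finite) = 1"
proof -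
  have "\<And>i. \<bar>axis j (1::real) $ i\<bar> = (if i = j then 1 else 0)" by (simp add: axis_def)
  then have "norm_one (axis j (1::real) :: real^'n) = (\<Sum>i\<in>UNIV. if i = j then 1 else 0)"
    by (simp add: norm_one_def)
  also have "\<dots> = 1" by (simp add: sum.delta)
  finally show ?thesis .
qed

lemma Max_scale:
  fixes f :: "'a \<Rightarrow> real"
  assumes "finite A" "A \<noteq> {}" "c \<ge> 0"
  shows "Max ((\<lambda>i. c * f i) ` A) = c * Max (f ` A)"
proof (rule Max_eqI)
  show "finite ((\<lambda>i. c * f i) ` A)" using assms by simp
  fix y assume "y \<in> (\<lambda>i. c * f i) ` A"
  then obtain i where i: "i \<in> A" "y = c * f i" by blast
  have "f i \<le> Max (f ` A)" using i assms by simp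
  then show "y \<le> c * Max (f ` A)" using i assms(3) by (simp add: mult_left_mono)
next
  have "Max (f ` A) \<in> f ` A" using assms by simp
  then obtain i where "i \<in> A" "Max (f ` A) = f i" by blast
  then show "c * Max (f ` A) \<in> (\<lambda>i. c * f i) ` A" by (metis image_eqI)
qed

context GTset begin

subsection \<open>Case (b): tnrm = norm_one\<close>

definition KA where "KA i = {x $ i | x. x \<in> C \<and> nrm x = 1}"
definition ka where "ka i = Sup (KA i)"
definition Rb where "Rb = Inf (ka ` S)"

lemma KA_ne: "KA i \<noteq> {}" using x0C unfolding KA_def by blast
lemma KA_bdd: "bdd_above (KA i)"
proof -
  have "y \<le> 1 / cn" if yK: "y \<in> KA i" for y
  proof -
    obtain x where x: "y = x $ i" "x \<in> C" "nrm x = 1" using yK unfolding KA_def by blast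
    then show ?thesis using comp_bound[OF x(2,3)] by simp
  qed
  then show ?thesis unfolding bdd_above_def by blast
qed
lemma ka_upper: "x \<in> C \<Longrightarrow> nrm x = 1 \<Longrightarrow> x $ i \<le> ka i"
  unfolding ka_def by (rule cSup_upper[OF _ KA_bdd]) (auto simp: KA_def)
lemma ka_pos: "i \<in> S \<Longrightarrow> ka i > 0"
  using ka_upper[OF x0C, of i] x0pos[of i] by simp
lemma Rb_Min: "Rb = Min (ka ` S)" unfolding Rb_def using Sne by (simp add: cInf_eq_Min)
lemma Rb_le: "i \<in> S \<Longrightarrow> Rb \<le> ka i" unfolding Rb_Min by simp
lemma Rb_in: "\<exists>j\<in>S. ka j = Rb"
proof -
  have "Rb \<in> ka ` S" unfolding Rb_Min by (rule Min_in) (use Sne in auto)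
  then show ?thesis by auto
qed
lemma Rb_pos: "Rb > 0" using Rb_in ka_pos by force

lemma T_one_axis: "j \<in> S \<Longrightarrow> dualV S norm_one (axis j 1) = 1"
proof -
  assume j: "j \<in> S"
  have "dualV S norm_one (axis j 1) = Max ((\<lambda>i. axis j (1::real) $ i) ` S)" by (rule T_one[OF Sne KS_axis[OF j]])
  also have "\<dots> = 1"
  proof (rule Max_eqI)
    show "finite ((\<lambda>i. axis j (1::real) $ i) ` S)" by simp
    fix y assume "y \<in> (\<lambda>i. axis j (1::real) $ i) ` S" then show "y \<le> 1" by (auto simp: axis_def)
  next
    show "1 \<in> (\<lambda>i. axis j (1::real) $ i) ` S" using j by (auto simp: axis_def image_iff intro!: bexI[of _ j])
  qed
  finally show ?thesis .
qed

lemma nu_B: "nuV S nrm norm_one M = Rb"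
proof (rule antisym)
  show "Rb \<le> nuV S nrm norm_one M"
  proof (rule nu_lower)
    obtain j where j: "j \<in> S" using Sne by blast
    show "NS norm_one \<noteq> {}" unfolding NS_def using W_zero KS_axis[OF j] T_one_axis[OF j] by blast
  next
    fix u y assume uy: "u \<in> KS S" "y \<in> W" "dualV S norm_one u = 1"
    have "Max ((\<lambda>i. u $ i) ` S) = 1" using T_one[OF Sne uy(1)] uy(3) by simp
    moreover have "Max ((\<lambda>i. u $ i) ` S) \<in> (\<lambda>i. u $ i) ` S" by (rule Max_in) (use Sne in auto)
    ultimately obtain j where j: "j \<in> S" "u $ j = 1" by force
    have "ka j \<le> Nd (u - y)" unfolding ka_def
    proof (rule cSup_least[OF KA_ne])
      fix m assume "m \<in> KA j"
      then obtain x where x: "m = x $ j" "x \<in> C" "nrm x = 1" unfolding KA_def by blast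
      have "x $ j = u $ j * x $ j" using j by simp
      also have "\<dots> \<le> (\<Sum>i\<in>S. u $ i * x $ i)"
        by (rule member_le_sum[OF j(1)]) (use uy(1) C_nonneg[OF x(2)] in \<open>auto simp: KS_iff\<close>)
      also have "\<dots> = u \<bullet> x" using inner_KS_sum[OF uy(1)] by simp
      also have "\<dots> \<le> Nd (u - y)" by (rule key_lower[OF uy(1,2) x(2,3)])
      finally show "m \<le> Nd (u - y)" using x(1) by simp
    qed
    then show "Rb \<le> Nd (u - y)" using Rb_le[OF j(1)] by simp
  qed
  show "nuV S nrm norm_one M \<le> Rb"
  proof (rule nu_le_eps)
    fix \<delta> :: real assume dl: "\<delta> > 0"
    obtain j where j: "j \<in> S" "ka j = Rb" using Rb_in by blast
    have hyp: "\<exists>u\<in>{axis j 1}. u \<bullet> x \<le> ka j" if x: "x \<in> C" "nrm x = 1" for x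
      using ka_upper[OF x] by (simp add: inner_axis')
    have "\<exists>u\<in>{axis j 1}. \<exists>z\<in>KS S. \<exists>y\<in>W. Nd (u + z - y) \<le> ka j + \<delta>"
    proof (rule H[OF _ _ _ _ dl hyp])
      show "{axis j 1} \<subseteq> KS S" using KS_axis[OF j(1)] by simp
      show "convex {axis j (1::real)}" by (rule convex_singleton)
      show "{axis j (1::real)} \<noteq> {}" by simp
      show "0 \<le> ka j" using ka_pos[OF j(1)] by simp
    qed
    then obtain u z y where uzy: "u \<in> {axis j 1}" "z \<in> KS S" "y \<in> W" "Nd (u + z - y) \<le> ka j + \<delta>"
      by blast
    have uK: "u \<in> KS S" using uzy(1) KS_axis[OF j(1)] by simp
    have uzK: "u + z \<in> KS S" using KS_add[OF uK uzy(2)] .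
    define t where "t = Max ((\<lambda>i. (u + z) $ i) ` S)"
    have "(u + z) $ j \<le> t" unfolding t_def using j(1) by simp
    moreover have "(u + z) $ j \<ge> 1" using uzy(1,2) by (simp add: KS_iff)
    ultimately have t1: "t \<ge> 1" by simp
    have "dualV S norm_one ((1 / t) *\<^sub>R (u + z)) = Max ((\<lambda>i. ((1 / t) *\<^sub>R (u + z)) $ i) ` S)"
      by (rule T_one[OF Sne KS_scale[OF uzK]]) (use t1 in simp)
    also have "\<dots> = Max ((\<lambda>i. (1 / t) * (u + z) $ i) ` S)" by simp
    also have "\<dots> = (1 / t) * Max ((\<lambda>i. (u + z) $ i) ` S)" by (rule Max_scale) (use Sne t1 in auto)
    also have "\<dots> = (1 / t) * t" by (simp only: t_def)
    also have "\<dots> = 1" using t1 by simp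
    finally have "nuV S nrm norm_one M \<le> Nd ((u + z) - y)" by (intro nu_scale[OF uzK uzy(3) t1])
    then show "nuV S nrm norm_one M \<le> Rb + \<delta>" using uzy(4) j(2) by (simp add: algebra_simps)
  qed
qed

lemma sigma_B: "sigmaV S nrm norm_one M = ereal Rb"
proof (rule antisym)
  obtain j where j: "j \<in> S" "ka j = Rb" using Rb_in by blast
  show "sigmaV S nrm norm_one M \<le> ereal Rb"
  proof (rule sigma_le[where v="axis j 1" and tnrm=norm_one, OF KS_axis[OF j(1)] norm_one_axis], rule sv_le)
    fix x t assume x: "x \<in> M" "nrm x \<le> 1" "x - t *\<^sub>R axis j 1 \<in> KS S"
    show "t \<le> Rb"
    proof (cases "t \<le> 0")
      case True then show ?thesis using Rb_pos by simp
    next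
      case False
      have xj: "t \<le> x $ j"
      proof -
        have "0 \<le> (x - t *\<^sub>R axis j 1) $ j" using x(3) unfolding KS_iff by blast
        then show ?thesis by (simp add: axis_def)
      qed
      have nn: "nonneg x" using KS_nonneg_sub[OF x(1) x(3) KS_axis[OF j(1)]] False by simp
      have xne: "x \<noteq> 0" using xj False by auto
      have np: "nrm x > 0" using nrm_pos[OF xne] .
      have "x $ j \<le> x $ j / nrm x" using x(2) np nn by (simp add: nonneg_def le_divide_eq mult_left_le)
      also have "\<dots> = ((1 / nrm x) *\<^sub>R x) $ j" by simp
      also have "\<dots> \<le> ka j" using ka_upper normalize_C[OF x(1) nn xne] by blast
      finally show ?thesis using xj j(2) by simp
    qed
  qed
  show "ereal Rb \<le> sigmaV S nrm norm_one M"
  proof (rule sigma_ge)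
    fix v assume v: "v \<in> KS S" "norm_one v = 1"
    have vS: "(\<Sum>i\<in>S. v $ i) = 1"
    proof -
      have "(\<Sum>i\<in>S. v $ i) = (\<Sum>i\<in>UNIV. v $ i)"
        by (rule sum.mono_neutral_left) (use v(1) in \<open>auto simp: KS_iff\<close>)
      also have "\<dots> = norm_one v" unfolding norm_one_def using v(1) by (simp add: KS_iff)
      finally show ?thesis using v(2) by simp
    qed
    show "ereal Rb \<le> sv v"
    proof (rule ereal_le_epsilon2)
      fix e :: real assume e: "e > 0"
      have "\<forall>i\<in>S. \<exists>x. x \<in> C \<and> nrm x = 1 \<and> ka i - e < x $ i"
      proof
        fix i assume "i \<in> S"
        have "ka i - e < Sup (KA i)" using e by (simp add: ka_def)
        then obtain m where "m \<in> KA i" "ka i - e < m" using less_cSup_iff[OF KA_ne KA_bdd] by blast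
        then show "\<exists>x. x \<in> C \<and> nrm x = 1 \<and> ka i - e < x $ i" unfolding KA_def by blast
      qed
      then obtain X where X: "\<And>i. i \<in> S \<Longrightarrow> X i \<in> C \<and> nrm (X i) = 1 \<and> ka i - e < X i $ i"
        using bchoice[of S] by metis
      define x where "x = (\<Sum>i\<in>S. v $ i *\<^sub>R X i)"
      have xM: "x \<in> M" unfolding x_def using X subM by (intro subspace_sum subspace_scale) (auto simp: C_def)
      have "nrm x \<le> (\<Sum>i\<in>S. nrm (v $ i *\<^sub>R X i))" unfolding x_def by (rule isn_sum[OF isn]) simp
      also have "\<dots> = (\<Sum>i\<in>S. v $ i)"
        using X v(1) nb(4) by (intro sum.cong) (auto simp: KS_iff)
      finally have xn: "nrm x \<le> 1" using vS by simp
      have "x - (Rb - e) *\<^sub>R v \<in> KS S"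
        unfolding KS_iff
      proof (intro conjI allI impI)
        fix k assume k: "k \<notin> S"
        have "x $ k = 0" unfolding x_def using X k C_VS by (auto simp: VS_iff intro!: sum.neutral)
        then show "(x - (Rb - e) *\<^sub>R v) $ k = 0" using v(1) k by (simp add: KS_iff)
      next
        fix k
        show "0 \<le> (x - (Rb - e) *\<^sub>R v) $ k"
        proof (cases "k \<in> S")
          case True
          have vk: "v $ k \<ge> 0" using v(1) by (simp add: KS_iff)
          have "(Rb - e) * v $ k \<le> (ka k - e) * v $ k" using Rb_le[OF True] vk by (simp add: mult_right_mono)
          also have "\<dots> \<le> X k $ k * v $ k" using X[OF True] vk by (simp add: mult_right_mono)
          also have "\<dots> = v $ k * X k $ k" by simp
          also have "\<dots> \<le> (\<Sum>i\<in>S. v $ i * X i $ k)"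
            by (rule member_le_sum[OF True]) (use v(1) X C_nonneg in \<open>auto simp: KS_iff\<close>)
          also have "\<dots> = x $ k" unfolding x_def by simp
          finally show ?thesis by simp
        next
          case False
          have "x $ k = 0" unfolding x_def using X False C_VS by (auto simp: VS_iff intro!: sum.neutral)
          then show ?thesis using v(1) False by (simp add: KS_iff)
        qed
      qed
      then have "ereal (Rb - e) \<le> sv v" using sv_ge[OF xM xn] by simp
      then show "ereal Rb \<le> sv v + ereal e"
        by (metis add_right_mono diff_add_cancel plus_ereal.simps(1))
    qed
  qed
qed

end



context GTset begin

subsection \<open>Case (c): both norms Euclidean\<close>

definition KK where "KK u = {u \<bullet> x | x. x \<in> C \<and> nrm x = 1}"
definition kk where "kk u = Sup (KK u)"
definition RCs where "RCs = {kk u | u. u \<in> KS S \<and> norm u = 1}"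
definition Rc where "Rc = Inf RCs"

lemma KK_ne: "KK u \<noteq> {}" using x0C unfolding KK_def by blast
lemma KK_bdd: "bdd_above (KK u)"
proof -
  have "y \<le> norm u * (1 / cn)" if yK: "y \<in> KK u" for y
  proof -
    obtain x where x: "y = u \<bullet> x" "x \<in> C" "nrm x = 1" using yK unfolding KK_def by blast
    have "u \<bullet> x \<le> norm u * norm x" by (metis Cauchy_Schwarz_ineq2 abs_le_D1 norm_ge_zero)
    also have "\<dots> \<le> norm u * (1 / cn)" using C_norm_bound[OF x(3)] by (intro mult_left_mono) auto
    finally show ?thesis using x(1) by simp
  qed
  then show ?thesis unfolding bdd_above_def by blast
qed
lemma kk_upper: "x \<in> C \<Longrightarrow> nrm x = 1 \<Longrightarrow> u \<bullet> x \<le> kk u"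
  unfolding kk_def by (rule cSup_upper[OF _ KK_bdd]) (auto simp: KK_def)
lemma kk_nonneg: "u \<in> KS S \<Longrightarrow> kk u \<ge> 0"
proof -
  assume u: "u \<in> KS S"
  have "nonneg u" using u by (simp add: KS_def)
  then have "0 \<le> u \<bullet> x0" using x0C(1) by (intro inner_nonneg_nonneg) (auto simp: C_def)
  then show ?thesis using kk_upper[OF x0C, of u] by linarith
qed
lemma RCs_ne: "RCs \<noteq> {}"
proof -
  obtain j where j: "j \<in> S" using Sne by blast
  then show ?thesis unfolding RCs_def using KS_axis[OF j] by (auto intro!: exI[of _ "axis j 1"])
qed
lemma RCs_bdd: "bdd_below RCs" unfolding RCs_def bdd_below_def using kk_nonneg by blast
lemma Rc_le: "u \<in> KS S \<Longrightarrow> norm u = 1 \<Longrightarrow> Rc \<le> kk u"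
  unfolding Rc_def by (rule cInf_lower[OF _ RCs_bdd]) (auto simp: RCs_def)
lemma Rc_nonneg: "Rc \<ge> 0"
  unfolding Rc_def using RCs_ne by (rule cInf_greatest) (auto simp: RCs_def kk_nonneg)

lemma nu_C: assumes nE: "nrm = norm" shows "nuV S nrm norm M = Rc"
proof (rule antisym)
  show "Rc \<le> nuV S nrm norm M"
  proof (rule nu_lower)
    obtain j where j: "j \<in> S" using Sne by blast
    have "dualV S norm (axis j 1) = 1" using T_two[OF Sne KS_VS[OF KS_axis[OF j]]] by simp
    then show "NS norm \<noteq> {}" unfolding NS_def using W_zero KS_axis[OF j] by blast
  next
    fix u y assume uy: "u \<in> KS S" "y \<in> W" "dualV S norm u = 1"
    have nu: "norm u = 1" using T_two[OF Sne KS_VS[OF uy(1)]] uy(3) by simp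
    have "kk u \<le> Nd (u - y)" unfolding kk_def
    proof (rule cSup_least[OF KK_ne])
      fix m assume "m \<in> KK u"
      then obtain x where x: "m = u \<bullet> x" "x \<in> C" "nrm x = 1" unfolding KK_def by blast
      show "m \<le> Nd (u - y)" using key_lower[OF uy(1,2) x(2,3)] x(1) by simp
    qed
    then show "Rc \<le> Nd (u - y)" using Rc_le[OF uy(1) nu] by simp
  qed
  show "nuV S nrm norm M \<le> Rc"
    unfolding Rc_def
  proof (rule cInf_greatest[OF RCs_ne])
    fix k assume "k \<in> RCs"
    then obtain u where u: "k = kk u" "u \<in> KS S" "norm u = 1" unfolding RCs_def by blast
    have "nuV S nrm norm M \<le> kk u"
    proof (rule nu_le_eps)
      fix \<delta> :: real assume dl: "\<delta> > 0"
      have hyp: "\<exists>w\<in>{u}. w \<bullet> x \<le> kk u" if x: "x \<in> C" "nrm x = 1" for x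
        using kk_upper[OF x] by simp
      have "\<exists>w\<in>{u}. \<exists>z\<in>KS S. \<exists>y\<in>W. Nd (w + z - y) \<le> kk u + \<delta>"
      proof (rule H[OF _ _ _ _ dl hyp])
        show "{u} \<subseteq> KS S" using u(2) by simp
        show "convex {u}" by (rule convex_singleton)
        show "{u} \<noteq> {}" by simp
        show "0 \<le> kk u" by (rule kk_nonneg[OF u(2)])
      qed
      then obtain z y where zy: "z \<in> KS S" "y \<in> W" "Nd (u + z - y) \<le> kk u + \<delta>" by blast
      have uzK: "u + z \<in> KS S" using KS_add[OF u(2) zy(1)] .
      define t where "t = norm (u + z)"
      have uz0: "u \<bullet> z \<ge> 0" using u(2) zy(1) by (intro inner_nonneg_nonneg) (auto simp: KS_def)
      have "t ^ 2 = (u + z) \<bullet> (u + z)" unfolding t_def by (simp add: power2_norm_eq_inner)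
      also have "\<dots> = u \<bullet> u + 2 * (u \<bullet> z) + z \<bullet> z" by (simp add: inner_add_left inner_add_right inner_commute)
      also have "\<dots> \<ge> 1" using u(3) uz0 by (simp add: power2_norm_eq_inner[symmetric])
      finally have "t ^ 2 \<ge> 1" .
      then have t1: "t \<ge> 1" unfolding t_def by (metis abs_norm_cancel one_le_power power2_le_imp_le norm_ge_zero one_le_numeral abs_le_square_iff power_one)
      have "dualV S norm ((1 / t) *\<^sub>R (u + z)) = norm ((1 / t) *\<^sub>R (u + z))"
        by (rule T_two[OF Sne KS_VS[OF KS_scale[OF uzK]]]) (use t1 in simp)
      also have "\<dots> = 1" using t1 by (auto simp: t_def)
      finally have "nuV S nrm norm M \<le> Nd ((u + z) - y)" by (intro nu_scale[OF uzK zy(2) t1])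
      then show "nuV S nrm norm M \<le> kk u + \<delta>" using zy(3) by (simp add: algebra_simps)
    qed
    then show "nuV S nrm norm M \<le> k" using u(1) by simp
  qed
qed

lemma sigma_C_le: "sigmaV S nrm norm M \<le> ereal Rc"
proof (rule ereal_le_epsilon2)
  fix e :: real assume e: "e > 0"
  have "Inf RCs < Rc + e" using e by (simp add: Rc_def)
  then obtain k where k: "k \<in> RCs" "k < Rc + e" using cInf_less_iff[OF RCs_ne RCs_bdd] by blast
  then obtain u where u: "k = kk u" "u \<in> KS S" "norm u = 1" unfolding RCs_def by blast
  have "sigmaV S nrm norm M \<le> ereal (kk u)"
  proof (rule sigma_le[where v=u and tnrm=norm, OF u(2,3)], rule sv_le)
    fix x t assume x: "x \<in> M" "nrm x \<le> 1" "x - t *\<^sub>R u \<in> KS S"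
    show "t \<le> kk u"
    proof (cases "t \<le> 0")
      case True then show ?thesis using kk_nonneg[OF u(2)] by simp
    next
      case False
      have nn: "nonneg x" using KS_nonneg_sub[OF x(1) x(3) u(2)] False by simp
      have "0 \<le> u \<bullet> (x - t *\<^sub>R u)" using u(2) x(3) by (intro inner_nonneg_nonneg) (auto simp: KS_def)
      then have ux: "u \<bullet> x \<ge> t" using u(3) by (simp add: inner_diff_right power2_norm_eq_inner[symmetric])
      have xne: "x \<noteq> 0" using ux False by auto
      have np: "nrm x > 0" using nrm_pos[OF xne] .
      have "u \<bullet> x \<le> (u \<bullet> x) / nrm x" using x(2) np ux False by (simp add: le_divide_eq mult_left_le)
      also have "\<dots> = u \<bullet> ((1 / nrm x) *\<^sub>R x)" by simp
      also have "\<dots> \<le> kk u" using kk_upper normalize_C[OF x(1) nn xne] by blast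
      finally show ?thesis using ux by simp
    qed
  qed
  also have "ereal (kk u) \<le> ereal Rc + ereal e" using k u(1) by simp
  finally show "sigmaV S nrm norm M \<le> ereal Rc + ereal e" .
qed

lemma sigma_C_ge: assumes nE: "nrm = norm" shows "ereal Rc \<le> sigmaV S nrm norm M"
proof (rule sigma_ge)
  fix v assume v: "v \<in> KS S" "norm v = 1"
  show "ereal Rc \<le> sv v"
  proof (rule ereal_le_epsilon2)
    fix e :: real assume e: "e > 0"
    define t where "t = Rc - e"
    have "ereal t \<le> sv v"
    proof (cases "t \<le> 0")
      case True
      have "0 - t *\<^sub>R v \<in> KS S" using KS_scale[OF v(1), of "- t"] True by simp
      then show ?thesis using sv_ge[OF subspace_0[OF subM]] nb(1) by simp
    next
      case False
      define C1 where "C1 = C \<inter> cball 0 1"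
      define A where "A = (\<Union>z\<in>KS S. \<Union>x\<in>C1. {z - x})"
      have clC: "closed C"
      proof -
        have "C = M \<inter> KS UNIV" by (auto simp: C_def KS_def VS_def)
        then show ?thesis using closed_subspace[OF subM] closed_KS by (metis closed_Int)
      qed
      have cvC: "convex C"
      proof -
        have "C = M \<inter> KS UNIV" by (auto simp: C_def KS_def VS_def)
        then show ?thesis using subspace_imp_convex[OF subM] convex_KS by (metis convex_Int)
      qed
      have kC1: "compact C1" unfolding C1_def using clC
        by (metis bounded_Int bounded_cball closed_Int closed_cball compact_eq_bounded_closed)
      have clA: "closed A" unfolding A_def by (rule closed_compact_differences[OF closed_KS kC1])
      have cvA: "convex A" unfolding A_def C1_def
        by (rule convex_differences[OF convex_KS convex_Int[OF cvC convex_cball]])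
      have "- (t *\<^sub>R v) \<in> A"
      proof (rule ccontr)
        assume nA: "- (t *\<^sub>R v) \<notin> A"
        obtain a b where ab: "a \<bullet> (- (t *\<^sub>R v)) < b" "\<forall>w\<in>A. b < a \<bullet> w"
          using separating_hyperplane_closed_point[OF cvA clA nA] by blast
        have zA: "z - x \<in> A" if "z \<in> KS S" "x \<in> C1" for z x using that unfolding A_def by blast
        have x0C1: "0 \<in> C1" using subspace_0[OF subM] by (simp add: C1_def C_def nonneg_def)
        have "b < a \<bullet> (0 - 0)" using ab(2) zA[OF KS_zero x0C1] by blast
        then have b0: "b < 0" by simp
        define g where "g = rs S a"
        have gi: "0 \<le> g $ i" for i
        proof (cases "i \<in> S")
          case True
          show ?thesis
          proof (rule lin1[where a=0 and b=b and c="g $ i"])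
            fix s :: real assume s: "s \<ge> 0"
            have "b < a \<bullet> (s *\<^sub>R axis i 1 - 0)" using ab(2) zA[OF KS_scale[OF KS_axis[OF True] s] x0C1] by blast
            then show "0 + s * g $ i > b" using True by (simp add: g_def rs_def inner_axis)
          qed
        next
          case False then show ?thesis by (simp add: g_def rs_def)
        qed
        have gK: "g \<in> KS S" using gi rs_VS[of S a] by (simp add: KS_def g_def nonneg_def)
        have gx: "g \<bullet> x < - b" if "x \<in> C1" for x
        proof -
          have "b < a \<bullet> (0 - x)" using ab(2) zA[OF KS_zero that] by blast
          moreover have "g \<bullet> x = a \<bullet> x" using rs_inner[OF C_VS, of x a] that by (simp add: g_def C1_def)
          ultimately show ?thesis by simp
        qed
        have "g \<bullet> v = a \<bullet> v" using rs_inner[OF KS_VS[OF v(1)], of a] by (simp add: g_def)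
        then have tgv: "t * (g \<bullet> v) > - b" using ab(1) by simp
        have gv: "g \<bullet> v \<le> norm g" using Cauchy_Schwarz_ineq2[of g v] v(2) by simp
        have gne: "g \<noteq> 0" using tgv b0 by auto
        have ng: "norm g > 0" using gne by simp
        define u where "u = (1 / norm g) *\<^sub>R g"
        have uK: "u \<in> KS S" "norm u = 1" using KS_scale[OF gK] gne by (auto simp: u_def)
        have "kk u \<le> - b / norm g" unfolding kk_def
        proof (rule cSup_least[OF KK_ne])
          fix m assume "m \<in> KK u"
          then obtain x where x: "m = u \<bullet> x" "x \<in> C" "nrm x = 1" unfolding KK_def by blast
          have "x \<in> C1" using x(2,3) nE by (simp add: C1_def)
          then have "g \<bullet> x < - b" by (rule gx)
          then have "g \<bullet> x / norm g \<le> (- b) / norm g" using ng by (intro divide_right_mono) auto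
          then show "m \<le> - b / norm g" using x(1) by (simp add: u_def)
        qed
        moreover have "- b / norm g < t"
        proof -
          have "- b < t * norm g" using tgv gv False by (smt (verit) mult_left_mono)
          then show ?thesis using ng by (simp add: field_simps)
        qed
        moreover have "Rc \<le> kk u" by (rule Rc_le[OF uK])
        ultimately show False using e by (simp add: t_def)
      qed
      then obtain z x where zx: "z \<in> KS S" "x \<in> C1" "- (t *\<^sub>R v) = z - x" unfolding A_def by blast
      have "x - t *\<^sub>R v = z" using zx(3) by (simp add: algebra_simps)
      then have "x - t *\<^sub>R v \<in> KS S" using zx(1) by simp
      moreover have "x \<in> M" "nrm x \<le> 1" using zx(2) nE by (auto simp: C1_def C_def)
      ultimately show ?thesis using sv_ge by blast
    qed
    then show "ereal Rc \<le> sv v + ereal e" unfolding t_def by (metis add_right_mono diff_add_cancel plus_ereal.simps(1))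
  qed
qed

end



lemma is_norm_norm: "is_norm (norm :: real^'n::finite \<Rightarrow> real)"
  unfolding is_norm_def by (auto simp: norm_triangle_ineq)

lemma is_norm_one: "is_norm (norm_one :: real^'n::finite \<Rightarrow> real)"
  unfolding is_norm_def norm_one_def
proof (intro conjI allI)
  fix x :: "real^'n"
  show "0 \<le> (\<Sum>i\<in>UNIV. \<bar>x $ i\<bar>)" by (simp add: sum_nonneg)
  show "((\<Sum>i\<in>UNIV. \<bar>x $ i\<bar>) = 0) = (x = 0)"
    by (simp add: sum_nonneg_eq_0_iff vec_eq_iff)
next
  fix c :: real and x :: "real^'n"
  show "(\<Sum>i\<in>UNIV. \<bar>(c *\<^sub>R x) $ i\<bar>) = \<bar>c\<bar> * (\<Sum>i\<in>UNIV. \<bar>x $ i\<bar>)"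
    by (simp add: abs_mult sum_distrib_left)
next
  fix x y :: "real^'n"
  have "(\<Sum>i\<in>UNIV. \<bar>(x + y) $ i\<bar>) \<le> (\<Sum>i\<in>UNIV. \<bar>x $ i\<bar> + \<bar>y $ i\<bar>)"
    by (rule sum_mono) (simp add: abs_triangle_ineq)
  then show "(\<Sum>i\<in>UNIV. \<bar>(x + y) $ i\<bar>) \<le> (\<Sum>i\<in>UNIV. \<bar>x $ i\<bar>) + (\<Sum>i\<in>UNIV. \<bar>y $ i\<bar>)"
    by (simp add: sum.distrib)
qed

lemma simplex_iff: "x \<in> std_simplex \<longleftrightarrow> nonneg x \<and> norm_one x = 1"
proof -
  have "nonneg x \<Longrightarrow> norm_one x = (\<Sum>i\<in>UNIV. x $ i)" unfolding norm_one_def nonneg_def by simp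
  then show ?thesis unfolding std_simplex_def by auto
qed

lemma side:
  fixes S :: "'n::finite set" and M L' :: "(real^'n) set" and p :: "real^'n"
  assumes Sne: "S \<noteq> {}" and subM: "subspace M" and MV: "M \<subseteq> VS S" and pM: "p \<in> M"
    and ppos: "\<forall>i\<in>S. 0 < p$i"
    and eqv: "\<And>x. (x \<in> L' \<and> nonneg x) \<longleftrightarrow> (x \<in> M \<and> nonneg x)"
  shows "\<And>nrm. is_norm nrm \<Longrightarrow>
         sigmaV S nrm norm_inf M = ereal (nuV S nrm norm_inf M) \<and>
         nuV S nrm norm_inf M = Sup {Min ((\<lambda>i. x $ i) ` S) | x. x \<in> L' \<and> nonneg x \<and> nrm x = 1}"
    and "sigmaV S norm_one norm_inf M = ereal (nuV S norm_one norm_inf M) \<and>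
         nuV S norm_one norm_inf M = Sup {Min ((\<lambda>i. x $ i) ` S) | x. x \<in> L' \<inter> std_simplex}"
    and "\<And>nrm. is_norm nrm \<Longrightarrow>
         sigmaV S nrm norm_one M = ereal (nuV S nrm norm_one M) \<and>
         nuV S nrm norm_one M = Inf ((\<lambda>i. Sup {x $ i | x. x \<in> L' \<and> nonneg x \<and> nrm x = 1}) ` S)"
    and "sigmaV S norm_one norm_one M = ereal (nuV S norm_one norm_one M) \<and>
         nuV S norm_one norm_one M = Inf ((\<lambda>i. Sup {x $ i | x. x \<in> L' \<inter> std_simplex}) ` S)"
    and "sigmaV S norm norm M = ereal (nuV S norm norm M) \<and>
         nuV S norm norm M = Inf {Sup {u \<bullet> x | x. x \<in> L' \<and> nonneg x \<and> norm x = 1} | u. u \<in> KS S \<and> norm u = 1}"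
proof -
  have A: "sigmaV S nrm norm_inf M = ereal (nuV S nrm norm_inf M) \<and>
         nuV S nrm norm_inf M = Sup {Min ((\<lambda>i. x $ i) ` S) | x. x \<in> L' \<and> nonneg x \<and> nrm x = 1}"
    if isn: "is_norm nrm" for nrm
  proof -
    interpret G: GTset S M nrm p using Sne subM MV pM ppos isn by unfold_locales
    have "{Min ((\<lambda>i. x $ i) ` S) | x. x \<in> L' \<and> nonneg x \<and> nrm x = 1} = G.RA"
      unfolding G.RA_def G.mn_def G.C_def using eqv by blast
    then show ?thesis using G.nu_A G.sigma_A by (simp add: G.Ra_def)
  qed
  have B: "sigmaV S nrm norm_one M = ereal (nuV S nrm norm_one M) \<and>
         nuV S nrm norm_one M = Inf ((\<lambda>i. Sup {x $ i | x. x \<in> L' \<and> nonneg x \<and> nrm x = 1}) ` S)"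
    if isn: "is_norm nrm" for nrm
  proof -
    interpret G: GTset S M nrm p using Sne subM MV pM ppos isn by unfold_locales
    have "\<And>i. {x $ i | x. x \<in> L' \<and> nonneg x \<and> nrm x = 1} = G.KA i"
      unfolding G.KA_def G.C_def using eqv by blast
    then have e: "(\<lambda>i. Sup {x $ i | x. x \<in> L' \<and> nonneg x \<and> nrm x = 1}) = G.ka"
      unfolding G.ka_def by (simp add: fun_eq_iff)
    show ?thesis unfolding e using G.nu_B G.sigma_B by (simp add: G.Rb_def)
  qed
  show "\<And>nrm. is_norm nrm \<Longrightarrow>
         sigmaV S nrm norm_inf M = ereal (nuV S nrm norm_inf M) \<and>
         nuV S nrm norm_inf M = Sup {Min ((\<lambda>i. x $ i) ` S) | x. x \<in> L' \<and> nonneg x \<and> nrm x = 1}"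
    by (rule A)
  show "\<And>nrm. is_norm nrm \<Longrightarrow>
         sigmaV S nrm norm_one M = ereal (nuV S nrm norm_one M) \<and>
         nuV S nrm norm_one M = Inf ((\<lambda>i. Sup {x $ i | x. x \<in> L' \<and> nonneg x \<and> nrm x = 1}) ` S)"
    by (rule B)
  have simp1: "(x \<in> L' \<inter> std_simplex) \<longleftrightarrow> (x \<in> L' \<and> nonneg x \<and> norm_one x = 1)" for x
    by (simp add: simplex_iff)
  show "sigmaV S norm_one norm_inf M = ereal (nuV S norm_one norm_inf M) \<and>
         nuV S norm_one norm_inf M = Sup {Min ((\<lambda>i. x $ i) ` S) | x. x \<in> L' \<inter> std_simplex}"
    using A[OF is_norm_one] unfolding simp1 .
  show "sigmaV S norm_one norm_one M = ereal (nuV S norm_one norm_one M) \<and>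
         nuV S norm_one norm_one M = Inf ((\<lambda>i. Sup {x $ i | x. x \<in> L' \<inter> std_simplex}) ` S)"
    using B[OF is_norm_one] unfolding simp1 .
  show "sigmaV S norm norm M = ereal (nuV S norm norm M) \<and>
         nuV S norm norm M = Inf {Sup {u \<bullet> x | x. x \<in> L' \<and> nonneg x \<and> norm x = 1} | u. u \<in> KS S \<and> norm u = 1}"
  proof -
    interpret G: GTset S M norm p using Sne subM MV pM ppos is_norm_norm by unfold_locales
    have "\<And>u. {u \<bullet> x | x. x \<in> L' \<and> nonneg x \<and> norm x = 1} = G.KK u"
      unfolding G.KK_def G.C_def using eqv by blast
    then have "{Sup {u \<bullet> x | x. x \<in> L' \<and> nonneg x \<and> norm x = 1} | u. u \<in> KS S \<and> norm u = 1} = G.RCs"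
      unfolding G.RCs_def G.kk_def by simp
    moreover have "nuV S norm norm M = G.Rc" by (rule G.nu_C) simp
    moreover have "sigmaV S norm norm M = ereal G.Rc"
      using G.sigma_C_le G.sigma_C_ge[OF refl] by (rule antisym)
    ultimately show ?thesis by (simp add: G.Rc_def)
  qed
qed




theorem mainTheorem15:
  fixes L :: "(real^'n) set" and m :: nat and B :: "'n set"
  assumes "L \<in> Gr m" and "1 \<le> m" and "m < CARD('n)"
    and "GT_partition L B"
  shows
  \<comment> \<open>(a) triple norm = sup norm, arbitrary norm\<close>
  "(\<forall>nrm :: real^'n \<Rightarrow> real. is_norm nrm \<longrightarrow>
      (B \<noteq> {} \<longrightarrow>
         sigmaV B nrm norm_inf (L \<inter> VS B) = ereal (nuV B nrm norm_inf (L \<inter> VS B)) \<and>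
         nuV B nrm norm_inf (L \<inter> VS B) =
           Sup {Min ((\<lambda>i. x $ i) ` B) | x. x \<in> L \<and> nonneg x \<and> nrm x = 1}) \<and>
      (- B \<noteq> {} \<longrightarrow>
         sigmaV (- B) nrm norm_inf (orthogonal_comp L \<inter> VS (- B))
           = ereal (nuV (- B) nrm norm_inf (orthogonal_comp L \<inter> VS (- B))) \<and>
         nuV (- B) nrm norm_inf (orthogonal_comp L \<inter> VS (- B)) =
           Sup {Min ((\<lambda>i. x $ i) ` (- B)) | x. x \<in> orthogonal_comp L \<and> nonneg x \<and> nrm x = 1}))
   \<and>
  \<comment> \<open>(a), special case norm = 1-norm\<close>
   (B \<noteq> {} \<longrightarrow>
      sigmaV B norm_one norm_inf (L \<inter> VS B) = ereal (nuV B norm_one norm_inf (L \<inter> VS B)) \<and>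
      nuV B norm_one norm_inf (L \<inter> VS B) =
        Sup {Min ((\<lambda>i. x $ i) ` B) | x. x \<in> L \<inter> std_simplex}) \<and>
   (- B \<noteq> {} \<longrightarrow>
      sigmaV (- B) norm_one norm_inf (orthogonal_comp L \<inter> VS (- B))
        = ereal (nuV (- B) norm_one norm_inf (orthogonal_comp L \<inter> VS (- B))) \<and>
      nuV (- B) norm_one norm_inf (orthogonal_comp L \<inter> VS (- B)) =
        Sup {Min ((\<lambda>i. x $ i) ` (- B)) | x. x \<in> orthogonal_comp L \<inter> std_simplex})
   \<and>
  \<comment> \<open>(b) triple norm = 1-norm, arbitrary norm\<close>
   (\<forall>nrm :: real^'n \<Rightarrow> real. is_norm nrm \<longrightarrow>
      (B \<noteq> {} \<longrightarrow>
         sigmaV B nrm norm_one (L \<inter> VS B) = ereal (nuV B nrm norm_one (L \<inter> VS B)) \<and>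
         nuV B nrm norm_one (L \<inter> VS B) =
           Inf ((\<lambda>i. Sup {x $ i | x. x \<in> L \<and> nonneg x \<and> nrm x = 1}) ` B)) \<and>
      (- B \<noteq> {} \<longrightarrow>
         sigmaV (- B) nrm norm_one (orthogonal_comp L \<inter> VS (- B))
           = ereal (nuV (- B) nrm norm_one (orthogonal_comp L \<inter> VS (- B))) \<and>
         nuV (- B) nrm norm_one (orthogonal_comp L \<inter> VS (- B)) =
           Inf ((\<lambda>i. Sup {x $ i | x. x \<in> orthogonal_comp L \<and> nonneg x \<and> nrm x = 1}) ` (- B))))
   \<and>
  \<comment> \<open>(b), special case norm = 1-norm\<close>
   (B \<noteq> {} \<longrightarrow>
      sigmaV B norm_one norm_one (L \<inter> VS B) = ereal (nuV B norm_one norm_one (L \<inter> VS B)) \<and>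
      nuV B norm_one norm_one (L \<inter> VS B) =
        Inf ((\<lambda>i. Sup {x $ i | x. x \<in> L \<inter> std_simplex}) ` B)) \<and>
   (- B \<noteq> {} \<longrightarrow>
      sigmaV (- B) norm_one norm_one (orthogonal_comp L \<inter> VS (- B))
        = ereal (nuV (- B) norm_one norm_one (orthogonal_comp L \<inter> VS (- B))) \<and>
      nuV (- B) norm_one norm_one (orthogonal_comp L \<inter> VS (- B)) =
        Inf ((\<lambda>i. Sup {x $ i | x. x \<in> orthogonal_comp L \<inter> std_simplex}) ` (- B)))
   \<and>
  \<comment> \<open>(c) both norms = Euclidean norm\<close>
   (B \<noteq> {} \<longrightarrow>
      sigmaV B norm norm (L \<inter> VS B) = ereal (nuV B norm norm (L \<inter> VS B)) \<and>
      nuV B norm norm (L \<inter> VS B) =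
        Inf {Sup {u \<bullet> x | x. x \<in> L \<and> nonneg x \<and> norm x = 1} | u. u \<in> KS B \<and> norm u = 1}) \<and>
   (- B \<noteq> {} \<longrightarrow>
      sigmaV (- B) norm norm (orthogonal_comp L \<inter> VS (- B))
        = ereal (nuV (- B) norm norm (orthogonal_comp L \<inter> VS (- B))) \<and>
      nuV (- B) norm norm (orthogonal_comp L \<inter> VS (- B)) =
        Inf {Sup {u \<bullet> x | x. x \<in> orthogonal_comp L \<and> nonneg x \<and> norm x = 1} | u.
               u \<in> KS (- B) \<and> norm u = 1})"
proof -
  have subL: "subspace L" using assms(1) by (simp add: Gr_def)
  obtain xp where xp: "xp \<in> L" "\<forall>i\<in>B. 0 < xp $ i" "\<forall>i. i \<notin> B \<longrightarrow> xp $ i = 0"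
    using assms(4) unfolding GT_partition_def by blast
  obtain yp where yp: "yp \<in> orthogonal_comp L" "\<forall>i\<in>B. yp $ i = 0" "\<forall>i. i \<notin> B \<longrightarrow> 0 < yp $ i"
    using assms(4) unfolding GT_partition_def by blast
  have xpn: "0 \<le> xp $ i" for i using xp by (cases "i \<in> B") (auto simp: less_imp_le)
  have ypn: "0 \<le> yp $ i" for i using yp by (cases "i \<in> B") (auto simp: less_imp_le)
  have eqvB: "(x \<in> L \<and> nonneg x) \<longleftrightarrow> (x \<in> L \<inter> VS B \<and> nonneg x)" for x
  proof
    assume x: "x \<in> L \<and> nonneg x"
    have "orthogonal x yp" using yp(1) x unfolding orthogonal_comp_def by blast
    then have "(\<Sum>i\<in>UNIV. x $ i * yp $ i) = 0" by (simp add: orthogonal_def inner_cart)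
    moreover have "\<forall>i\<in>UNIV. 0 \<le> x $ i * yp $ i" using x ypn by (simp add: nonneg_def)
    ultimately have "\<forall>i\<in>UNIV. x $ i * yp $ i = 0" by (simp add: sum_nonneg_eq_0_iff)
    then have "\<forall>i. i \<notin> B \<longrightarrow> x $ i = 0" using yp(3) by force
    then show "x \<in> L \<inter> VS B \<and> nonneg x" using x by (simp add: VS_iff)
  qed simp
  have eqvN: "(x \<in> orthogonal_comp L \<and> nonneg x) \<longleftrightarrow> (x \<in> orthogonal_comp L \<inter> VS (- B) \<and> nonneg x)" for x
  proof
    assume x: "x \<in> orthogonal_comp L \<and> nonneg x"
    have "orthogonal xp x" using xp(1) x unfolding orthogonal_comp_def by blast
    then have "(\<Sum>i\<in>UNIV. xp $ i * x $ i) = 0" by (simp add: orthogonal_def inner_cart)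
    moreover have "\<forall>i\<in>UNIV. 0 \<le> xp $ i * x $ i" using x xpn by (simp add: nonneg_def)
    ultimately have "\<forall>i\<in>UNIV. xp $ i * x $ i = 0" by (simp add: sum_nonneg_eq_0_iff)
    then have "\<forall>i. i \<notin> - B \<longrightarrow> x $ i = 0" using xp(2) by force
    then show "x \<in> orthogonal_comp L \<inter> VS (- B) \<and> nonneg x" using x by (simp add: VS_iff)
  qed simp
  have subB: "subspace (L \<inter> VS B)" by (intro subspace_inter subL subspace_VS)
  have subN: "subspace (orthogonal_comp L \<inter> VS (- B))" by (intro subspace_inter subspace_orthogonal_comp subspace_VS)
  have pB: "xp \<in> L \<inter> VS B" using xp by (simp add: VS_iff)
  have pN: "yp \<in> orthogonal_comp L \<inter> VS (- B)" using yp by (simp add: VS_iff)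
  have pposB: "\<forall>i\<in>B. 0 < xp $ i" using xp by simp
  have pposN: "\<forall>i\<in>- B. 0 < yp $ i" using yp by simp
  have MVB: "L \<inter> VS B \<subseteq> VS B" by blast
  have MVN: "orthogonal_comp L \<inter> VS (- B) \<subseteq> VS (- B)" by blast
  note sB = side[OF _ subB MVB pB pposB eqvB]
  note sN = side[OF _ subN MVN pN pposN eqvN]
  show ?thesis
    apply (intro conjI allI impI)
    apply (rule conjunct1[OF sB(1)]; assumption)
    apply (rule conjunct2[OF sB(1)]; assumption)
    apply (rule conjunct1[OF sN(1)]; assumption)
    apply (rule conjunct2[OF sN(1)]; assumption)
    apply (rule conjunct1[OF sB(2)]; assumption)
    apply (rule conjunct2[OF sB(2)]; assumption)
    apply (rule conjunct1[OF sN(2)]; assumption)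
    apply (rule conjunct2[OF sN(2)]; assumption)
    apply (rule conjunct1[OF sB(3)]; assumption)
    apply (rule conjunct2[OF sB(3)]; assumption)
    apply (rule conjunct1[OF sN(3)]; assumption)
    apply (rule conjunct2[OF sN(3)]; assumption)
    apply (rule conjunct1[OF sB(4)]; assumption)
    apply (rule conjunct2[OF sB(4)]; assumption)
    apply (rule conjunct1[OF sN(4)]; assumption)
    apply (rule conjunct2[OF sN(4)]; assumption)
    apply (rule conjunct1[OF sB(5)]; assumption)
    apply (rule conjunct2[OF sB(5)]; assumption)
    apply (rule conjunct1[OF sN(5)]; assumption)
    apply (rule conjunct2[OF sN(5)]; assumption)
    done
qed



end
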